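(* Let $p$ be the POP of length 4 defined by the relations $1>3$, $1>2$ and $4>2$; equivalently, avoiding $p$ means simultaneously avoiding the patterns $4132, 4213, 3214, 4123, 3124$. Let $a(n)=|S_n(p)|$. Then $a(0)=a(1)=1$, $a(2)=2$, and for $n\geq 3$, $$a(n)=4a(n-1)-3a(n-2)+a(n-3);$$ consequently, for $n\geq 1$, $a(n)=\sum_{i=0}^{n-1}\binom{n+2i-1}{3i}$. Moreover, $$\sum_{n\geq 0}a(n)x^n=\frac{1-3x+x^2}{1-4x+3x^2-x^3}.$$
   Context: An $n$-permutation is a word $\pi=\pi_1\cdots\pi_n$ containing each of $1,\ldots,n$ exactly once; $S_n$ is the set of $n$-permutations ($S_0$ consists of the empty permutation). A partially ordered pattern (POP) $p$ of length $k$ is a partial order on the label set $\{1,\ldots,k\}$; it is described by a set of generating relations, where a relation $x>y$ means that in an occurrence the entry in the $x$-th chosen position must be larger than the entry in the $y$-th chosen position, and labels not involved in any relation are unconstrained. An $n$-permutation $\pi$ contains $p$ if there are indices $1\leq i_1<\cdots<i_k\leq n$ such that $\pi_{i_x}>\pi_{i_y}$ whenever $x>y$ in the partial order; otherwise $\pi$ avoids $p$. $S_n(p)$ denotes the set of $n$-permutations avoiding $p$. A permutation $\pi$ avoids a classical pattern $q$ if it has no subsequence order-isomorphic to $q$. *)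

theory Defs
  imports Main "HOL-Computational_Algebra.Formal_Power_Series"
begin

text \<open>n-permutations as lists (1-indexed entries: pi_j = pi ! (j-1)).\<close>
definition perms :: "nat \<Rightarrow> nat list set" where
  "perms n = {xs. distinct xs \<and> set xs = {1..n}}"

text \<open>A POP of length k is given by a set R of generating relations (x,y),
  meaning label x > label y. pi contains the POP if there are positions
  i_1 < ... < i_k with pi_{i_x} > pi_{i_y} for every relation (x,y).\<close>
definition pop_contains :: "nat \<Rightarrow> (nat \<times> nat) set \<Rightarrow> nat list \<Rightarrow> bool" where
  "pop_contains k R \<pi> \<longleftrightarrow>
     (\<exists>i::nat \<Rightarrow> nat. strict_mono_on {1..k} i \<and>
        (\<forall>x\<in>{1..k}. 1 \<le> i x \<and> i x \<le> length \<pi>) \<and>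
        (\<forall>(x, y)\<in>R. \<pi> ! (i x - 1) > \<pi> ! (i y - 1)))"

definition pop_avoids :: "nat \<Rightarrow> (nat \<times> nat) set \<Rightarrow> nat list \<Rightarrow> bool" where
  "pop_avoids k R \<pi> \<longleftrightarrow> \<not> pop_contains k R \<pi>"

definition pat_contains :: "nat list \<Rightarrow> nat list \<Rightarrow> bool" where
  "pat_contains q \<pi> \<longleftrightarrow>
     (\<exists>i::nat \<Rightarrow> nat. strict_mono_on {1..length q} i \<and>
        (\<forall>x\<in>{1..length q}. 1 \<le> i x \<and> i x \<le> length \<pi>) \<and>
        (\<forall>x\<in>{1..length q}. \<forall>y\<in>{1..length q}.
            \<pi> ! (i x - 1) < \<pi> ! (i y - 1) \<longleftrightarrow> q ! (x - 1) < q ! (y - 1)))"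

definition pat_avoids :: "nat list \<Rightarrow> nat list \<Rightarrow> bool" where
  "pat_avoids q \<pi> \<longleftrightarrow> \<not> pat_contains q \<pi>"

definition popP :: "(nat \<times> nat) set" where
  "popP = {(1, 3), (1, 2), (4, 2)}"

definition aP :: "nat \<Rightarrow> nat" where
  "aP n = card {\<pi> \<in> perms n. pop_avoids 4 popP \<pi>}"

end

theory Submission
  imports Defs "HOL-Library.Sublist"
begin

unbundle fps_syntax



definition occ :: "nat list \<Rightarrow> bool" where
  "occ xs \<longleftrightarrow> (\<exists>a b c d. subseq [a,b,c,d] xs \<and> b < a \<and> c < a \<and> b < d)"

definition fav :: "nat list \<Rightarrow> bool" where
  "fav xs \<longleftrightarrow> \<not>(\<exists>b c d. subseq [b,c,d] xs \<and> b < d)"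

definition cnd :: "nat \<Rightarrow> nat list \<Rightarrow> bool" where
  "cnd x xs \<longleftrightarrow> \<not>(\<exists>b c d. subseq [b,c,d] xs \<and> b < x \<and> c < x \<and> b < d)"

lemma sub_Cons: "subseq (a#as) (x#xs) \<longleftrightarrow> (a = x \<and> subseq as xs) \<or> subseq (a#as) xs"
  by (auto dest: subseq_Cons')

lemma occ_Cons: "occ (x#xs) \<longleftrightarrow> occ xs \<or> \<not> cnd x xs"
  unfolding occ_def cnd_def sub_Cons by blast

lemma occ_Nil: "\<not> occ []" by (simp add: occ_def)

lemma occ_mono: "subseq xs ys \<Longrightarrow> occ xs \<Longrightarrow> occ ys"
  unfolding occ_def by (meson subseq_order.trans)

lemma fav_mono: "subseq xs ys \<Longrightarrow> fav ys \<Longrightarrow> fav xs"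
  unfolding fav_def by (meson subseq_order.trans)



lemma sub3_Cons: "subseq [b,c,d] (x#xs) \<longleftrightarrow> (b = x \<and> subseq [c,d] xs) \<or> subseq [b,c,d] xs"
  by (rule sub_Cons)

lemma sub_in: assumes "subseq ys xs" "y \<in> set ys" shows "y \<in> set xs"
  by (rule list_emb_set[OF assms]) simp

lemma sub2_in1: "subseq [c,d] xs \<Longrightarrow> c \<in> set xs"
  using sub_in by fastforce
lemma sub2_in2: "subseq [c,d] xs \<Longrightarrow> d \<in> set xs"
  using sub_in by fastforce

lemma sub2_Cons_tl: "subseq [c,d] (w#W) \<Longrightarrow> d \<in> set W"
proof -
  assume "subseq [c,d] (w#W)"
  then have "(c = w \<and> subseq [d] W) \<or> subseq [c,d] W" by (simp only: sub_Cons)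
  then show ?thesis
  proof
    assume "c = w \<and> subseq [d] W" then show ?thesis by (simp add: subseq_singleton_left)
  next
    assume "subseq [c,d] W" then show ?thesis by (rule sub2_in2)
  qed
qed

lemma split4: "[a,b,c,d] = p1 @ p2 \<Longrightarrow> (p1 = [] \<and> p2 = [a,b,c,d]) \<or> (p1 = [a] \<and> p2 = [b,c,d]) \<or> (p1 = [a,b] \<and> p2 = [c,d])
       \<or> (p1 = [a,b,c] \<and> p2 = [d]) \<or> (p1 = [a,b,c,d] \<and> p2 = [])"
  by (auto simp: Cons_eq_append_conv)

lemma tail_lemma:
  assumes dist: "distinct t" and xn: "x \<notin> set t" and yn: "y \<notin> set t" and yx: "y < x"
  shows "(\<not> occ t \<and> cnd y t \<and> cnd x t \<and> \<not>(\<exists>c d. subseq [c,d] t \<and> c < x \<and> y < d))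
    \<longleftrightarrow> (\<exists>U W. t = U @ W \<and> (\<forall>u\<in>set U. x < u) \<and> (\<forall>w\<in>set W. w < x) \<and> fav (y#W) \<and> \<not> occ U)"
proof
  assume L: "\<not> occ t \<and> cnd y t \<and> cnd x t \<and> \<not>(\<exists>c d. subseq [c,d] t \<and> c < x \<and> y < d)"
  define U where "U = takeWhile (\<lambda>v. x < v) t"
  define W where "W = dropWhile (\<lambda>v. x < v) t"
  have tUW: "t = U @ W" unfolding U_def W_def by simp
  have U1: "\<forall>u\<in>set U. x < u" unfolding U_def by (auto dest: set_takeWhileD)
  have sW: "subseq W t" unfolding tUW by (rule subseq_drop_many) (rule subseq_order.refl)
  have dW: "distinct W" using dist tUW by simp
  have W1: "\<forall>w\<in>set W. w < x \<and> (w \<noteq> hd W \<longrightarrow> w < y)"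
  proof (cases W)
    case Nil then show ?thesis by simp
  next
    case (Cons w1 W')
    have "\<not> x < w1" using Cons unfolding W_def
      by (metis hd_dropWhile list.distinct(1) list.sel(1))
    moreover have "w1 \<in> set t" using sW Cons sub_in by (metis list.set_intros(1))
    then have "w1 \<noteq> x" using xn by auto
    ultimately have w1x: "w1 < x" by simp
    have "\<forall>w\<in>set W'. w < y"
    proof
      fix w assume wW: "w \<in> set W'"
      then have "subseq [w1,w] W" using Cons by (simp add: subseq_singleton_left)
      then have "subseq [w1,w] t" using sW by (rule subseq_order.trans)
      then have "\<not> y < w" using L w1x by blast
      moreover have "w \<in> set t" using wW Cons tUW by simp
      then have "w \<noteq> y" using yn by auto
      ultimately show "w < y" by simp
    qed
    then show ?thesis using Cons w1x yx by auto
  qed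
  have favW: "fav (y#W)"
    unfolding fav_def
  proof
    assume "\<exists>b c d. subseq [b, c, d] (y # W) \<and> b < d"
    then obtain b c d where bcd: "subseq [b, c, d] (y # W)" "b < d" by blast
    show False
    proof (cases "b = y \<and> subseq [c,d] W")
      case True
      then obtain w1 W' where WC: "W = w1 # W'" by (cases W) simp_all
      with True have "subseq [c,d] (w1#W')" by simp
      then have dW': "d \<in> set W'" by (rule sub2_Cons_tl)
      then have "d \<noteq> w1" using dW WC by auto
      then have "d < y" using W1 WC dW' by simp
      then show False using True bcd by simp
    next
      case False
      from bcd(1) have "(b = y \<and> subseq [c,d] W) \<or> subseq [b,c,d] W" by (simp only: sub3_Cons)
      with False have sW3: "subseq [b,c,d] W" by (elim disjE) simp_all
      then have "subseq [b,c,d] t" using sW by (rule subseq_order.trans)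
      moreover have "b \<in> set W" "c \<in> set W" by (simp_all add: sub_in[OF sW3])
      then have "b < x" "c < x" using W1 by simp_all
      ultimately show False using L bcd(2) unfolding cnd_def by blast
    qed
  qed
  have "subseq U t" unfolding tUW by (rule subseq_rev_drop_many) (rule subseq_order.refl)
  then have "\<not> occ U" using L occ_mono by blast
  then show "\<exists>U W. t = U @ W \<and> (\<forall>u\<in>set U. x < u) \<and> (\<forall>w\<in>set W. w < x) \<and> fav (y#W) \<and> \<not> occ U"
    using tUW U1 W1 favW by blast
next
  assume "\<exists>U W. t = U @ W \<and> (\<forall>u\<in>set U. x < u) \<and> (\<forall>w\<in>set W. w < x) \<and> fav (y#W) \<and> \<not> occ U"
  then obtain U W where tUW: "t = U @ W" and U1: "\<forall>u\<in>set U. x < u" and W1: "\<forall>w\<in>set W. w < x"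
    and fW: "fav (y#W)" and oU: "\<not> occ U" by blast
  have "subseq W (y#W)" by (rule subseq_drop_many[of W W "[y]", simplified])
  then have fW': "fav W" using fW fav_mono by blast
  have low: "subseq (b # r) W" if "subseq (b # r) t" "b < x" for b r
  proof -
    from that(1) obtain p1 p2 where sp: "b # r = p1 @ p2" "subseq p1 U" "subseq p2 W"
      unfolding tUW subseq_append_iff by blast
    show ?thesis
    proof (cases p1)
      case Nil then show ?thesis using sp by simp
    next
      case (Cons q p1')
      then have "b \<in> set U" using sp sub_in by fastforce
      then show ?thesis using U1 that(2) by auto
    qed
  qed
  have "\<not> occ t"
  proof
    assume "occ t"
    then obtain a b c d where abcd: "subseq [a,b,c,d] t" "b < a" "c < a" "b < d" unfolding occ_def by blast
    then obtain p1 p2 where sp: "[a,b,c,d] = p1 @ p2" "subseq p1 U" "subseq p2 W"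
      unfolding tUW subseq_append_iff by blast
    have inU: "v \<in> set p1 \<Longrightarrow> x < v" for v using U1 sub_in[OF sp(2)] by blast
    have inW: "v \<in> set p2 \<Longrightarrow> v < x" for v using W1 sub_in[OF sp(3)] by blast
    have cs: "(p1 = [] \<and> p2 = [a,b,c,d]) \<or> (p1 = [a] \<and> p2 = [b,c,d]) \<or> (p1 = [a,b] \<and> p2 = [c,d])
       \<or> (p1 = [a,b,c] \<and> p2 = [d]) \<or> (p1 = [a,b,c,d] \<and> p2 = [])"
      using sp(1) by (rule split4)
    then show False
    proof (elim disjE conjE)
      assume "p1 = []" "p2 = [a,b,c,d]"
      then have "subseq [a,b,c,d] W" using sp by simp
      then have "subseq [b,c,d] W" by (rule subseq_Cons')
      then show False using fW' abcd unfolding fav_def by blast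
    next
      assume "p1 = [a]" "p2 = [b,c,d]"
      then have "subseq [b,c,d] W" using sp by simp
      then show False using fW' abcd unfolding fav_def by blast
    next
      assume "p1 = [a,b]" "p2 = [c,d]"
      then have "x < b" "d < x" using inU inW by auto
      then show False using abcd by simp
    next
      assume "p1 = [a,b,c]" "p2 = [d]"
      then have "x < b" "d < x" using inU inW by auto
      then show False using abcd by simp
    next
      assume "p1 = [a,b,c,d]" "p2 = []"
      then have "occ U" using sp abcd unfolding occ_def by auto
      then show False using oU by simp
    qed
  qed
  moreover have "cnd y t" unfolding cnd_def
  proof
    assume "\<exists>b c d. subseq [b, c, d] t \<and> b < y \<and> c < y \<and> b < d"
    then obtain b c d where "subseq [b, c, d] t" "b < y" "b < d" by blast
    then have "subseq [b,c,d] W" using low yx by simp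
    then show False using fW' \<open>b < d\<close> unfolding fav_def by blast
  qed
  moreover have "cnd x t" unfolding cnd_def
  proof
    assume "\<exists>b c d. subseq [b, c, d] t \<and> b < x \<and> c < x \<and> b < d"
    then obtain b c d where "subseq [b, c, d] t" "b < x" "b < d" by blast
    then have "subseq [b,c,d] W" using low by simp
    then show False using fW' \<open>b < d\<close> unfolding fav_def by blast
  qed
  moreover have "\<not>(\<exists>c d. subseq [c,d] t \<and> c < x \<and> y < d)"
  proof
    assume "\<exists>c d. subseq [c,d] t \<and> c < x \<and> y < d"
    then obtain c d where "subseq [c,d] t" "c < x" "y < d" by blast
    then have "subseq [c,d] W" using low by simp
    then have "subseq [y,c,d] (y#W)" by simp
    then show False using fW \<open>y < d\<close> unfolding fav_def by blast
  qed
  ultimately show "\<not> occ t \<and> cnd y t \<and> cnd x t \<and> \<not>(\<exists>c d. subseq [c,d] t \<and> c < x \<and> y < d)"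
    by blast
qed



lemma cnd_mono: "x \<le> y \<Longrightarrow> cnd y t \<Longrightarrow> cnd x t"
  unfolding cnd_def by (meson order_less_le_trans)

lemma cnd_Cons_big: "x < y \<Longrightarrow> cnd x (y#t) \<longleftrightarrow> cnd x t"
  unfolding cnd_def sub3_Cons by auto

lemma cnd_Cons_small: "y < x \<Longrightarrow> cnd x (y#t) \<longleftrightarrow> cnd x t \<and> \<not>(\<exists>c d. subseq [c,d] t \<and> c < x \<and> y < d)"
  unfolding cnd_def sub3_Cons by blast

lemma cnd_Nil: "cnd x []" unfolding cnd_def by simp

lemma G_lemma:
  "distinct (x#\<tau>) \<Longrightarrow> (\<not> occ \<tau> \<and> cnd x \<tau>) \<longleftrightarrow> (sorted_wrt (<) (x#\<tau>) \<or>
     (\<exists>R z U W. \<tau> = R @ z # U @ W \<and> sorted_wrt (<) (x#R) \<and> z < last (x#R) \<and>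
        (\<forall>u\<in>set U. last (x#R) < u) \<and> (\<forall>w\<in>set W. w < last (x#R)) \<and> fav (z#W) \<and> \<not> occ U))"
proof (induction \<tau> arbitrary: x)
  case Nil
  then show ?case by (simp add: occ_Nil cnd_Nil)
next
  case (Cons y t)
  have dt: "distinct (y#t)" using Cons.prems by simp
  have xy: "x \<noteq> y" using Cons.prems by auto
  show ?case
  proof (cases "x < y")
    case True
    have "(\<not> occ (y#t) \<and> cnd x (y#t)) \<longleftrightarrow> (\<not> occ t \<and> cnd y t)"
      using True cnd_Cons_big[OF True] cnd_mono[of x y t] occ_Cons by auto
    also have "\<dots> \<longleftrightarrow> (sorted_wrt (<) (y#t) \<or>
     (\<exists>R z U W. t = R @ z # U @ W \<and> sorted_wrt (<) (y#R) \<and> z < last (y#R) \<and>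
        (\<forall>u\<in>set U. last (y#R) < u) \<and> (\<forall>w\<in>set W. w < last (y#R)) \<and> fav (z#W) \<and> \<not> occ U))"
      by (rule Cons.IH[OF dt])
    also have "\<dots> \<longleftrightarrow> (sorted_wrt (<) (x#y#t) \<or>
     (\<exists>R z U W. y#t = R @ z # U @ W \<and> sorted_wrt (<) (x#R) \<and> z < last (x#R) \<and>
        (\<forall>u\<in>set U. last (x#R) < u) \<and> (\<forall>w\<in>set W. w < last (x#R)) \<and> fav (z#W) \<and> \<not> occ U))"
    proof -
      have s1: "sorted_wrt (<) (x#y#t) \<longleftrightarrow> sorted_wrt (<) (y#t)"
        using True by (auto intro: order_less_trans)
      have s2: "(\<exists>R z U W. t = R @ z # U @ W \<and> sorted_wrt (<) (y#R) \<and> z < last (y#R) \<and>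
        (\<forall>u\<in>set U. last (y#R) < u) \<and> (\<forall>w\<in>set W. w < last (y#R)) \<and> fav (z#W) \<and> \<not> occ U)
        \<longleftrightarrow> (\<exists>R z U W. y#t = R @ z # U @ W \<and> sorted_wrt (<) (x#R) \<and> z < last (x#R) \<and>
        (\<forall>u\<in>set U. last (x#R) < u) \<and> (\<forall>w\<in>set W. w < last (x#R)) \<and> fav (z#W) \<and> \<not> occ U)"
      proof
        assume "\<exists>R z U W. t = R @ z # U @ W \<and> sorted_wrt (<) (y#R) \<and> z < last (y#R) \<and>
        (\<forall>u\<in>set U. last (y#R) < u) \<and> (\<forall>w\<in>set W. w < last (y#R)) \<and> fav (z#W) \<and> \<not> occ U"
        then obtain R z U W where h: "t = R @ z # U @ W" "sorted_wrt (<) (y#R)" "z < last (y#R)"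
          "\<forall>u\<in>set U. last (y#R) < u" "\<forall>w\<in>set W. w < last (y#R)" "fav (z#W)" "\<not> occ U" by blast
        have "sorted_wrt (<) (x#y#R)" using h(2) True by (auto intro: order_less_trans)
        moreover have "last (x#y#R) = last (y#R)" by simp
        ultimately show "\<exists>R z U W. y#t = R @ z # U @ W \<and> sorted_wrt (<) (x#R) \<and> z < last (x#R) \<and>
        (\<forall>u\<in>set U. last (x#R) < u) \<and> (\<forall>w\<in>set W. w < last (x#R)) \<and> fav (z#W) \<and> \<not> occ U"
          using h by (intro exI[of _ "y#R"] exI[of _ z] exI[of _ U] exI[of _ W]) simp
      next
        assume "\<exists>R z U W. y#t = R @ z # U @ W \<and> sorted_wrt (<) (x#R) \<and> z < last (x#R) \<and>
        (\<forall>u\<in>set U. last (x#R) < u) \<and> (\<forall>w\<in>set W. w < last (x#R)) \<and> fav (z#W) \<and> \<not> occ U"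
        then obtain R z U W where h: "y#t = R @ z # U @ W" "sorted_wrt (<) (x#R)" "z < last (x#R)"
          "\<forall>u\<in>set U. last (x#R) < u" "\<forall>w\<in>set W. w < last (x#R)" "fav (z#W)" "\<not> occ U" by blast
        show "\<exists>R z U W. t = R @ z # U @ W \<and> sorted_wrt (<) (y#R) \<and> z < last (y#R) \<and>
        (\<forall>u\<in>set U. last (y#R) < u) \<and> (\<forall>w\<in>set W. w < last (y#R)) \<and> fav (z#W) \<and> \<not> occ U"
        proof (cases R)
          case Nil
          then show ?thesis using h True by simp
        next
          case (Cons r R')
          then have "r = y" "t = R' @ z # U @ W" using h(1) by simp_all
          moreover have "sorted_wrt (<) (y#R')" using h(2) Cons \<open>r = y\<close> by simp
          moreover have lx: "last (x#R) = last (y#R')" using Cons \<open>r = y\<close> by simp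
          ultimately show ?thesis using h(3-7) unfolding lx
            by (intro exI[of _ R'] exI[of _ z] exI[of _ U] exI[of _ W]) simp
        qed
      qed
      show ?thesis using s1 s2 by simp
    qed
    finally show ?thesis .
  next
    case False
    then have yx: "y < x" using xy by simp
    have "(\<not> occ (y#t) \<and> cnd x (y#t)) \<longleftrightarrow>
      (\<not> occ t \<and> cnd y t \<and> cnd x t \<and> \<not>(\<exists>c d. subseq [c,d] t \<and> c < x \<and> y < d))"
      using cnd_Cons_small[OF yx] occ_Cons by auto
    also have "\<dots> \<longleftrightarrow> (\<exists>U W. t = U @ W \<and> (\<forall>u\<in>set U. x < u) \<and> (\<forall>w\<in>set W. w < x) \<and> fav (y#W) \<and> \<not> occ U)"
      by (rule tail_lemma) (use Cons.prems yx in auto)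
    also have "\<dots> \<longleftrightarrow> (sorted_wrt (<) (x#y#t) \<or>
     (\<exists>R z U W. y#t = R @ z # U @ W \<and> sorted_wrt (<) (x#R) \<and> z < last (x#R) \<and>
        (\<forall>u\<in>set U. last (x#R) < u) \<and> (\<forall>w\<in>set W. w < last (x#R)) \<and> fav (z#W) \<and> \<not> occ U))"
    proof
      assume "\<exists>U W. t = U @ W \<and> (\<forall>u\<in>set U. x < u) \<and> (\<forall>w\<in>set W. w < x) \<and> fav (y#W) \<and> \<not> occ U"
      then obtain U W where h: "t = U @ W" "\<forall>u\<in>set U. x < u" "\<forall>w\<in>set W. w < x" "fav (y#W)" "\<not> occ U"
        by blast
      then show "sorted_wrt (<) (x#y#t) \<or>
     (\<exists>R z U W. y#t = R @ z # U @ W \<and> sorted_wrt (<) (x#R) \<and> z < last (x#R) \<and>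
        (\<forall>u\<in>set U. last (x#R) < u) \<and> (\<forall>w\<in>set W. w < last (x#R)) \<and> fav (z#W) \<and> \<not> occ U)"
        using yx by (intro disjI2 exI[of _ "[]"] exI[of _ y] exI[of _ U] exI[of _ W]) simp
    next
      assume "sorted_wrt (<) (x#y#t) \<or>
     (\<exists>R z U W. y#t = R @ z # U @ W \<and> sorted_wrt (<) (x#R) \<and> z < last (x#R) \<and>
        (\<forall>u\<in>set U. last (x#R) < u) \<and> (\<forall>w\<in>set W. w < last (x#R)) \<and> fav (z#W) \<and> \<not> occ U)"
      then obtain R z U W where h: "y#t = R @ z # U @ W" "sorted_wrt (<) (x#R)" "z < last (x#R)"
          "\<forall>u\<in>set U. last (x#R) < u" "\<forall>w\<in>set W. w < last (x#R)" "fav (z#W)" "\<not> occ U"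
        using yx by auto
      have "R = []"
      proof (cases R)
        case (Cons r R')
        then have "r = y" using h(1) by simp
        then show ?thesis using h(2) Cons yx by simp
      qed simp
      then show "\<exists>U W. t = U @ W \<and> (\<forall>u\<in>set U. x < u) \<and> (\<forall>w\<in>set W. w < x) \<and> fav (y#W) \<and> \<not> occ U"
        using h by auto
    qed
    finally show ?thesis .
  qed
qed

theorem char:
  assumes "distinct \<pi>"
  shows "\<not> occ \<pi> \<longleftrightarrow> (sorted_wrt (<) \<pi> \<or>
     (\<exists>R z U W. \<pi> = R @ z # U @ W \<and> R \<noteq> [] \<and> sorted_wrt (<) R \<and> z < last R \<and>
        (\<forall>u\<in>set U. last R < u) \<and> (\<forall>w\<in>set W. w < last R) \<and> fav (z#W) \<and> \<not> occ U))"
proof (cases \<pi>)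
  case Nil
  then show ?thesis by (simp add: occ_Nil)
next
  case (Cons x \<tau>)
  have "\<not> occ \<pi> \<longleftrightarrow> (\<not> occ \<tau> \<and> cnd x \<tau>)" using Cons occ_Cons by simp
  also have "\<dots> \<longleftrightarrow> (sorted_wrt (<) (x#\<tau>) \<or>
     (\<exists>R z U W. \<tau> = R @ z # U @ W \<and> sorted_wrt (<) (x#R) \<and> z < last (x#R) \<and>
        (\<forall>u\<in>set U. last (x#R) < u) \<and> (\<forall>w\<in>set W. w < last (x#R)) \<and> fav (z#W) \<and> \<not> occ U))"
    using G_lemma assms Cons by simp
  also have "\<dots> \<longleftrightarrow> (sorted_wrt (<) \<pi> \<or>
     (\<exists>R z U W. \<pi> = R @ z # U @ W \<and> R \<noteq> [] \<and> sorted_wrt (<) R \<and> z < last R \<and>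
        (\<forall>u\<in>set U. last R < u) \<and> (\<forall>w\<in>set W. w < last R) \<and> fav (z#W) \<and> \<not> occ U))"
  proof -
    have "(\<exists>R z U W. \<tau> = R @ z # U @ W \<and> sorted_wrt (<) (x#R) \<and> z < last (x#R) \<and>
        (\<forall>u\<in>set U. last (x#R) < u) \<and> (\<forall>w\<in>set W. w < last (x#R)) \<and> fav (z#W) \<and> \<not> occ U)
      \<longleftrightarrow> (\<exists>R z U W. \<pi> = R @ z # U @ W \<and> R \<noteq> [] \<and> sorted_wrt (<) R \<and> z < last R \<and>
        (\<forall>u\<in>set U. last R < u) \<and> (\<forall>w\<in>set W. w < last R) \<and> fav (z#W) \<and> \<not> occ U)"
    proof
      assume "\<exists>R z U W. \<tau> = R @ z # U @ W \<and> sorted_wrt (<) (x#R) \<and> z < last (x#R) \<and>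
        (\<forall>u\<in>set U. last (x#R) < u) \<and> (\<forall>w\<in>set W. w < last (x#R)) \<and> fav (z#W) \<and> \<not> occ U"
      then obtain R z U W where h: "\<tau> = R @ z # U @ W" "sorted_wrt (<) (x#R)" "z < last (x#R)"
          "\<forall>u\<in>set U. last (x#R) < u" "\<forall>w\<in>set W. w < last (x#R)" "fav (z#W)" "\<not> occ U" by blast
      show "\<exists>R z U W. \<pi> = R @ z # U @ W \<and> R \<noteq> [] \<and> sorted_wrt (<) R \<and> z < last R \<and>
        (\<forall>u\<in>set U. last R < u) \<and> (\<forall>w\<in>set W. w < last R) \<and> fav (z#W) \<and> \<not> occ U"
        using h Cons by (intro exI[of _ "x#R"] exI[of _ z] exI[of _ U] exI[of _ W]) simp
    next
      assume "\<exists>R z U W. \<pi> = R @ z # U @ W \<and> R \<noteq> [] \<and> sorted_wrt (<) R \<and> z < last R \<and>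
        (\<forall>u\<in>set U. last R < u) \<and> (\<forall>w\<in>set W. w < last R) \<and> fav (z#W) \<and> \<not> occ U"
      then obtain R z U W where h: "\<pi> = R @ z # U @ W" "R \<noteq> []" "sorted_wrt (<) R" "z < last R"
          "\<forall>u\<in>set U. last R < u" "\<forall>w\<in>set W. w < last R" "fav (z#W)" "\<not> occ U" by blast
      obtain r R' where RR: "R = r # R'" using h(2) by (cases R) auto
      then have "r = x" "\<tau> = R' @ z # U @ W" using h(1) Cons by simp_all
      then show "\<exists>R z U W. \<tau> = R @ z # U @ W \<and> sorted_wrt (<) (x#R) \<and> z < last (x#R) \<and>
        (\<forall>u\<in>set U. last (x#R) < u) \<and> (\<forall>w\<in>set W. w < last (x#R)) \<and> fav (z#W) \<and> \<not> occ U"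
        using h RR by blast
    qed
    then show ?thesis using Cons by simp
  qed
  finally show ?thesis .
qed



definition Aset :: "nat \<Rightarrow> nat list set" where
  "Aset n = {\<pi> \<in> perms n. \<not> occ \<pi>}"

definition Pset :: "nat \<Rightarrow> (nat list \<times> nat list) set" where
  "Pset m = {(R,Z). sorted_wrt (<) R \<and> fav Z \<and> distinct (R@Z) \<and> set (R@Z) = {1..m}}"

definition Phset :: "nat \<Rightarrow> (nat list \<times> nat list) set" where
  "Phset m = {(R,Z) \<in> Pset m. Z \<noteq> []}"

definition comb :: "nat \<Rightarrow> (nat list \<times> nat list) \<times> nat list \<Rightarrow> nat list" where
  "comb M X = (case X of ((R,Z),U) \<Rightarrow> R @ M # hd Z # map (\<lambda>u. u + M) U @ tl Z)"

lemma perms_length: "\<pi> \<in> perms n \<Longrightarrow> length \<pi> = n"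
  unfolding perms_def using distinct_card by fastforce

lemma finite_perms: "finite (perms n)"
proof -
  have "perms n \<subseteq> {xs. set xs \<subseteq> {1..n} \<and> length xs = n}"
    using perms_length unfolding perms_def by auto
  then show ?thesis using finite_lists_length_eq[of "{1..n}" n] finite_subset by blast
qed

lemma finite_Aset: "finite (Aset n)"
  unfolding Aset_def using finite_perms by simp

lemma sorted_perm: assumes "\<pi> \<in> perms n" "sorted_wrt (<) \<pi>" shows "\<pi> = [1..<n+1]"
proof -
  have d: "distinct \<pi>" and s: "set \<pi> = {1..n}" using assms(1) unfolding perms_def by simp_all
  have so: "sorted \<pi>" using assms(2) strict_sorted_iff by blast
  have s2: "set [1..<n+1] = {1..n}" by auto
  show ?thesis by (rule sorted_distinct_set_unique[OF so d]) (simp_all add: s atLeastLessThanSuc_atLeastAtMost del: upt_Suc)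
qed

lemma occ_shift: "occ (map (\<lambda>u. u + M) U) \<longleftrightarrow> occ U"
proof
  assume "occ (map (\<lambda>u. u + M) U)"
  then obtain a b c d where h: "subseq [a,b,c,d] (map (\<lambda>u. u + M) U)" "b < a" "c < a" "b < d"
    unfolding occ_def by blast
  have ge: "v \<in> set [a,b,c,d] \<Longrightarrow> M \<le> v" for v using sub_in[OF h(1)] by force
  have "subseq (map (\<lambda>u. u - M) [a,b,c,d]) (map (\<lambda>u. u - M) (map (\<lambda>u. u + M) U))"
    by (rule subseq_map[OF h(1)])
  then have "subseq [a-M,b-M,c-M,d-M] U" by (simp add: comp_def)
  moreover have "b - M < a - M" "c - M < a - M" "b - M < d - M" using h ge by (simp_all add: less_diff_iff)
  ultimately show "occ U" unfolding occ_def by blast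
next
  assume "occ U"
  then obtain a b c d where h: "subseq [a,b,c,d] U" "b < a" "c < a" "b < d"
    unfolding occ_def by blast
  have "subseq (map (\<lambda>u. u + M) [a,b,c,d]) (map (\<lambda>u. u + M) U)"
    by (rule subseq_map[OF h(1)])
  then show "occ (map (\<lambda>u. u + M) U)" unfolding occ_def using h by fastforce
qed

lemma sorted_last_ge: "sorted_wrt (<) (R::nat list) \<Longrightarrow> r \<in> set R \<Longrightarrow> r \<le> last R"
proof (induction R)
  case (Cons x xs)
  show ?case
  proof (cases "xs = []")
    case True then show ?thesis using Cons.prems by simp
  next
    case False
    then have "last xs \<in> set xs" by simp
    then have "x < last xs" using Cons.prems(1) by simp
    then show ?thesis using Cons False by (auto simp: less_imp_le)
  qed
qed simp

lemma split_unique: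
  "xs1 @ a # b # ys1 = xs2 @ c # d # (ys2::nat list) \<Longrightarrow> sorted_wrt (<) (xs1 @ [a]) \<Longrightarrow> b < a
   \<Longrightarrow> sorted_wrt (<) (xs2 @ [c]) \<Longrightarrow> d < c \<Longrightarrow> xs1 = xs2 \<and> a = c \<and> b = d \<and> ys1 = ys2"
proof (induction xs1 arbitrary: xs2)
  case Nil
  show ?case
  proof (cases xs2)
    case Nil then show ?thesis using Nil.prems by simp
  next
    case (Cons e xs2')
    then have "a = e" "b # ys1 = xs2' @ c # d # ys2" using Nil.prems by simp_all
    then have "a < b"
      using Nil.prems(4) Cons by (cases xs2') (auto simp: sorted_wrt_append)
    then show ?thesis using Nil.prems(3) by linarith
  qed
next
  case (Cons e xs1')
  show ?case
  proof (cases xs2)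
    case Nil
    then have "c = e" "d # ys2 = xs1' @ a # b # ys1" using Cons.prems by simp_all
    then have "c < d"
      using Cons.prems(2) by (cases xs1') (auto simp: sorted_wrt_append)
    then show ?thesis using Cons.prems(5) by linarith
  next
    case (Cons f xs2')
    then have "e = f" "xs1' @ a # b # ys1 = xs2' @ c # d # ys2" using Cons.prems by simp_all
    moreover have "sorted_wrt (<) (xs1' @ [a])" "sorted_wrt (<) (xs2' @ [c])"
      using Cons.prems \<open>xs2 = f # xs2'\<close> by simp_all
    ultimately show ?thesis using Cons.IH Cons.prems \<open>xs2 = f # xs2'\<close> by blast
  qed
qed



lemma Pset_memD: "(R,Z) \<in> Pset m \<Longrightarrow> sorted_wrt (<) R \<and> fav Z \<and> distinct (R@Z) \<and> set (R@Z) = {1..m}"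
  unfolding Pset_def by simp

lemma sorted_snoc_lt: "sorted_wrt (<) (R @ [M]) \<Longrightarrow> r \<in> set R \<Longrightarrow> r < (M::nat)"
  by (simp add: sorted_wrt_append)

lemma comb_in_A:
  assumes M: "M \<in> {1..n}" and RZ: "(R,Z) \<in> Phset (M-1)" and U: "U \<in> Aset (n-M)"
  shows "comb M ((R,Z),U) \<in> Aset n"
proof -
  have P: "sorted_wrt (<) R" "fav Z" "distinct (R@Z)" "set (R@Z) = {1..M-1}" "Z \<noteq> []"
    using RZ unfolding Phset_def Pset_def by simp_all
  obtain z W where ZW: "Z = z # W" using P(5) by (cases Z) auto
  have dU: "distinct U" and sU: "set U = {1..n-M}" and oU: "\<not> occ U"
    using U unfolding Aset_def perms_def by simp_all
  define V where "V = map (\<lambda>u. u + M) U"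
  have sV: "set V = {M+1..n}"
  proof -
    have "set V = (\<lambda>u. u + M) ` {1..n-M}" unfolding V_def using sU by simp
    also have "\<dots> = {M+1..n}" using M by (auto simp: image_iff intro!: exI[of _ "x - M" for x])
    finally show ?thesis .
  qed
  have dV: "distinct V" unfolding V_def using dU by (simp add: distinct_map inj_on_def)
  have pi: "comb M ((R,Z),U) = R @ M # z # V @ W" unfolding comb_def V_def ZW by simp
  have inl: "v \<in> set (R@Z) \<Longrightarrow> 1 \<le> v \<and> v < M" for v
  proof -
    assume "v \<in> set (R@Z)"
    then have "v \<in> {1..M-1}" using P(4) by blast
    then show ?thesis by auto
  qed
  have lowR: "\<forall>r\<in>set R. 1 \<le> r \<and> r < M" using inl by simp
  have lowz: "1 \<le> z \<and> z < M" using inl ZW by simp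
  have lowW: "\<forall>w\<in>set W. 1 \<le> w \<and> w < M" using inl ZW by simp
  have highV: "\<forall>v\<in>set V. M < v \<and> v \<le> n" using sV by auto
  have disj: "\<forall>v\<in>set V. v \<notin> set R \<and> v \<notin> set W \<and> v \<noteq> z \<and> v \<noteq> M"
    using highV lowR lowW lowz by fastforce
  have dist: "distinct (R @ M # z # V @ W)"
    using P(3) ZW dV disj lowR lowz lowW by auto
  have setpi: "set (R @ M # z # V @ W) = {1..n}"
  proof -
    have "set (R @ M # z # V @ W) = set (R @ z # W) \<union> {M} \<union> set V" by auto
    also have "\<dots> = {1..M-1} \<union> {M} \<union> {M+1..n}" using P(4) ZW sV by simp
    also have "\<dots> = {1..n}" using M by auto
    finally show ?thesis .
  qed
  have "\<not> occ (R @ M # z # V @ W)"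
  proof -
    have sR: "sorted_wrt (<) (R @ [M])" using P(1) lowR by (simp add: sorted_wrt_append)
    have "\<not> occ V" unfolding V_def using oU occ_shift by simp
    moreover have "fav (z#W)" using P(2) ZW by simp
    ultimately have "\<exists>R' z' U' W'. R @ M # z # V @ W = R' @ z' # U' @ W' \<and> R' \<noteq> [] \<and> sorted_wrt (<) R' \<and> z' < last R' \<and>
        (\<forall>u\<in>set U'. last R' < u) \<and> (\<forall>w\<in>set W'. w < last R') \<and> fav (z'#W') \<and> \<not> occ U'"
      using sR lowz lowW highV by (intro exI[of _ "R @ [M]"] exI[of _ z] exI[of _ V] exI[of _ W]) simp
    then show ?thesis using char[OF dist] by blast
  qed
  then show ?thesis using pi dist setpi unfolding Aset_def perms_def by simp
qed

lemma A_decomp: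
  assumes A: "\<pi> \<in> Aset n" and ns: "\<not> sorted_wrt (<) \<pi>"
  shows "\<exists>M R Z U. M \<in> {1..n} \<and> (R,Z) \<in> Phset (M-1) \<and> U \<in> Aset (n-M) \<and> \<pi> = comb M ((R,Z),U)"
proof -
  have d: "distinct \<pi>" and s: "set \<pi> = {1..n}" and o: "\<not> occ \<pi>"
    using A unfolding Aset_def perms_def by simp_all
  obtain R z U W where h: "\<pi> = R @ z # U @ W" "R \<noteq> []" "sorted_wrt (<) R" "z < last R"
    "\<forall>u\<in>set U. last R < u" "\<forall>w\<in>set W. w < last R" "fav (z#W)" "\<not> occ U"
    using char[OF d] o ns by blast
  define M where "M = last R"
  define R' where "R' = butlast R"
  have RR: "R = R' @ [M]" unfolding M_def R'_def using h(2) by simp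
  have sR': "sorted_wrt (<) R'" and lowR: "\<forall>r\<in>set R'. r < M"
    using h(3) unfolding RR by (simp_all add: sorted_wrt_append)
  have Mpi: "M \<in> set \<pi>" using h(1) RR by simp
  then have M: "M \<in> {1..n}" using s by simp
  have dd: "distinct (R' @ M # z # U @ W)" using d h(1) RR by simp
  have sU: "set U = {M+1..n}"
  proof
    show "set U \<subseteq> {M+1..n}"
    proof
      fix x assume x: "x \<in> set U"
      then have "x \<in> set \<pi>" using h(1) by simp
      then have "x \<le> n" using s by auto
      moreover have "M < x" using h(5) x M_def by simp
      ultimately show "x \<in> {M+1..n}" by simp
    qed
  next
    show "{M+1..n} \<subseteq> set U"
    proof
      fix v assume v: "v \<in> {M+1..n}"
      then have "v \<in> set \<pi>" using s by auto
      moreover have "v \<notin> set R'" using lowR v by auto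
      moreover have "v \<noteq> z" "v \<noteq> M" "v \<notin> set W" using h(4,6) v M_def by auto
      ultimately show "v \<in> set U" using h(1) RR by auto
    qed
  qed
  have sRZ: "set (R' @ z # W) = {1..M-1}"
  proof
    show "set (R' @ z # W) \<subseteq> {1..M-1}"
    proof
      fix v assume v: "v \<in> set (R' @ z # W)"
      then have "v \<in> set \<pi>" using h(1) RR by auto
      then have "1 \<le> v" using s by auto
      moreover have "v < M" using v lowR h(4,6) M_def by auto
      ultimately show "v \<in> {1..M-1}" by auto
    qed
  next
    show "{1..M-1} \<subseteq> set (R' @ z # W)"
    proof
      fix v assume v: "v \<in> {1..M-1}"
      then have "v \<in> set \<pi>" using s M by auto
      moreover have "v \<notin> set U" "v \<noteq> M" using sU v by auto
      ultimately show "v \<in> set (R' @ z # W)" using h(1) RR by auto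
    qed
  qed
  have RZ: "(R', z # W) \<in> Phset (M-1)"
    unfolding Phset_def Pset_def using sR' h(7) dd sRZ by auto
  define U0 where "U0 = map (\<lambda>u. u - M) U"
  have UU: "map (\<lambda>u. u + M) U0 = U" unfolding U0_def map_map
    by (rule map_idI) (use sU in auto)
  have dU: "distinct U" using dd by simp
  have dU0: "distinct U0" using dU UU by (metis distinct_map)
  have sU0: "set U0 = {1..n-M}"
  proof -
    have "set U0 = (\<lambda>u. u - M) ` {M+1..n}" unfolding U0_def using sU by simp
    also have "\<dots> = {1..n-M}" using M by (auto simp: image_iff intro!: bexI[of _ "x + M" for x])
    finally show ?thesis .
  qed
  have "\<not> occ U0" using h(8) occ_shift[of M U0] UU by simp
  then have U0A: "U0 \<in> Aset (n-M)" unfolding Aset_def perms_def using dU0 sU0 by simp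
  have "\<pi> = comb M ((R', z # W), U0)" unfolding comb_def using h(1) RR UU by simp
  then show ?thesis using M RZ U0A by blast
qed



lemma Phset_hd_lt: "(R,Z) \<in> Phset (M-1) \<Longrightarrow> hd Z < M \<and> sorted_wrt (<) (R @ [M])"
proof -
  assume a: "(R,Z) \<in> Phset (M-1)"
  then have P: "sorted_wrt (<) R" "set (R@Z) = {1..M-1}" "Z \<noteq> []"
    unfolding Phset_def Pset_def by simp_all
  have inl: "v \<in> set (R@Z) \<Longrightarrow> v < M" for v
  proof -
    assume "v \<in> set (R@Z)"
    then have "v \<in> {1..M-1}" using P(2) by blast
    then show ?thesis by auto
  qed
  have "hd Z \<in> set (R@Z)" using P(3) by simp
  then have "hd Z < M" using inl by blast
  moreover have "sorted_wrt (<) (R @ [M])" using P(1) inl by (simp add: sorted_wrt_append)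
  ultimately show ?thesis by simp
qed

lemma comb_not_sorted: "(R,Z) \<in> Phset (M-1) \<Longrightarrow> \<not> sorted_wrt (<) (comb M ((R,Z),U))"
proof
  assume a: "(R,Z) \<in> Phset (M-1)" and s: "sorted_wrt (<) (comb M ((R,Z),U))"
  have "sorted_wrt (<) (M # hd Z # map (\<lambda>u. u + M) U @ tl Z)"
    using s unfolding comb_def by (simp add: sorted_wrt_append)
  then have "M < hd Z" by simp
  then show False using Phset_hd_lt[OF a] by simp
qed

lemma comb_inj: "inj_on (\<lambda>(M,X). comb M X) (SIGMA M:{1..n}. Phset (M-1) \<times> Aset (n-M))"
proof (rule inj_onI)
  fix p q assume p: "p \<in> (SIGMA M:{1..n}. Phset (M-1) \<times> Aset (n-M))"
    and q: "q \<in> (SIGMA M:{1..n}. Phset (M-1) \<times> Aset (n-M))"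
    and eq: "(\<lambda>(M,X). comb M X) p = (\<lambda>(M,X). comb M X) q"
  obtain M1 R1 Z1 U1 where p1: "p = (M1,((R1,Z1),U1))" by (cases p) auto
  obtain M2 R2 Z2 U2 where q1: "q = (M2,((R2,Z2),U2))" by (cases q) auto
  have m1: "M1 \<in> {1..n}" "(R1,Z1) \<in> Phset (M1-1)" "U1 \<in> Aset (n-M1)" using p p1 by auto
  have m2: "M2 \<in> {1..n}" "(R2,Z2) \<in> Phset (M2-1)" "U2 \<in> Aset (n-M2)" using q q1 by auto
  have e: "R1 @ M1 # hd Z1 # (map (\<lambda>u. u + M1) U1 @ tl Z1) = R2 @ M2 # hd Z2 # (map (\<lambda>u. u + M2) U2 @ tl Z2)"
    using eq p1 q1 unfolding comb_def by simp
  have su: "R1 = R2 \<and> M1 = M2 \<and> hd Z1 = hd Z2 \<and> map (\<lambda>u. u + M1) U1 @ tl Z1 = map (\<lambda>u. u + M2) U2 @ tl Z2"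
    by (rule split_unique[OF e]) (use Phset_hd_lt[OF m1(2)] Phset_hd_lt[OF m2(2)] in auto)
  have l1: "length U1 = n - M1" using m1(3) perms_length unfolding Aset_def by blast
  have l2: "length U2 = n - M2" using m2(3) perms_length unfolding Aset_def by blast
  have MM: "M1 = M2" using su by simp
  have ap: "map (\<lambda>u. u + M1) U1 @ tl Z1 = map (\<lambda>u. u + M1) U2 @ tl Z2" using su MM by simp
  have "length (map (\<lambda>u. u + M1) U1) = length (map (\<lambda>u. u + M1) U2)" using l1 l2 MM by simp
  then have "map (\<lambda>u. u + M1) U1 = map (\<lambda>u. u + M1) U2 \<and> tl Z1 = tl Z2"
    using ap append_eq_append_conv by blast
  moreover have "inj (\<lambda>u::nat. u + M1)" by (simp add: inj_on_def)
  ultimately have "U1 = U2" "tl Z1 = tl Z2" using su by (simp_all add: inj_map_eq_map)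
  moreover have "Z1 \<noteq> []" "Z2 \<noteq> []" using m1(2) m2(2) unfolding Phset_def by auto
  ultimately have "Z1 = Z2" using su by (metis list.collapse)
  then show "p = q" using p1 q1 su \<open>U1 = U2\<close> by simp
qed

lemma finite_Pset: "finite (Pset m)"
proof -
  let ?L = "{xs. set xs \<subseteq> {1..m} \<and> length xs \<le> m}"
  have "Pset m \<subseteq> ?L \<times> ?L"
  proof
    fix p assume "p \<in> Pset m"
    then obtain R Z where p: "p = (R,Z)" "distinct (R@Z)" "set (R@Z) = {1..m}"
      unfolding Pset_def by auto
    have "length R = card (set R)" "length Z = card (set Z)" using p(2) by (simp_all add: distinct_card)
    moreover have "card (set R) \<le> m" "card (set Z) \<le> m"
      using p(3) by (metis card_atLeastAtMost card_mono diff_Suc_1 finite_atLeastAtMost set_append sup.cobounded1 sup.cobounded2)+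
    ultimately show "p \<in> ?L \<times> ?L" using p by auto
  qed
  moreover have "finite (?L \<times> ?L)" using finite_lists_length_le[of "{1..m}" m] by simp
  ultimately show ?thesis using finite_subset by blast
qed

lemma finite_Phset: "finite (Phset m)"
  by (rule finite_subset[OF _ finite_Pset]) (auto simp: Phset_def)

lemma inc_in_A: "[1..<n+1] \<in> Aset n"
proof -
  have d: "distinct [1..<n+1]" by simp
  have "sorted_wrt (<) [1..<n+1]" by (simp add: strict_sorted_iff del: upt_Suc)
  then have "\<not> occ [1..<n+1]" using char[OF d] by blast
  moreover have "set [1..<n+1] = {1..n}" by (auto simp del: upt_Suc)
  ultimately show ?thesis unfolding Aset_def perms_def using d by simp
qed

lemma card_A: "card (Aset n) = 1 + (\<Sum>M\<in>{1..n}. card (Phset (M-1)) * card (Aset (n-M)))"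
proof -
  let ?S = "SIGMA M:{1..n}. Phset (M-1) \<times> Aset (n-M)"
  let ?f = "\<lambda>(M,X). comb M X"
  have eq: "Aset n = insert [1..<n+1] (?f ` ?S)"
  proof
    show "Aset n \<subseteq> insert [1..<n+1] (?f ` ?S)"
    proof
      fix \<pi> assume a: "\<pi> \<in> Aset n"
      show "\<pi> \<in> insert [1..<n+1] (?f ` ?S)"
      proof (cases "sorted_wrt (<) \<pi>")
        case True
        then show ?thesis using sorted_perm a unfolding Aset_def by blast
      next
        case False
        then obtain M R Z U where "M \<in> {1..n}" "(R,Z) \<in> Phset (M-1)" "U \<in> Aset (n-M)" "\<pi> = comb M ((R,Z),U)"
          using A_decomp[OF a] by blast
        then have "(M,((R,Z),U)) \<in> ?S" "\<pi> = ?f (M,((R,Z),U))" by auto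
        then show ?thesis by blast
      qed
    qed
  next
    show "insert [1..<n+1] (?f ` ?S) \<subseteq> Aset n"
      using inc_in_A comb_in_A by auto
  qed
  have nin: "[1..<n+1] \<notin> ?f ` ?S"
  proof
    assume "[1..<n+1] \<in> ?f ` ?S"
    then obtain M R Z U where "(R,Z) \<in> Phset (M-1)" "[1..<n+1] = comb M ((R,Z),U)" by auto
    moreover have "sorted_wrt (<) [1..<n+1]" by (simp add: strict_sorted_iff del: upt_Suc)
    ultimately show False using comb_not_sorted by metis
  qed
  have fin: "finite ?S" using finite_Phset finite_Aset by auto
  have "card (Aset n) = Suc (card (?f ` ?S))" unfolding eq using nin fin by simp
  also have "card (?f ` ?S) = card ?S" using comb_inj by (rule card_image)
  also have "card ?S = (\<Sum>M\<in>{1..n}. card (Phset (M-1) \<times> Aset (n-M)))"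
    using finite_Phset finite_Aset by (simp add: card_SigmaI)
  also have "\<dots> = (\<Sum>M\<in>{1..n}. card (Phset (M-1)) * card (Aset (n-M)))"
    by (simp add: card_cartesian_product)
  finally show ?thesis by simp
qed



definition Ph1set :: "nat \<Rightarrow> (nat list \<times> nat list) set" where
  "Ph1set m = {(R,Z) \<in> Pset m. Z \<noteq> [] \<and> (\<forall>d\<in>set (tl Z). d < hd Z)}"

lemma mem_Pset: "(R,Z) \<in> Pset m \<longleftrightarrow> sorted_wrt (<) R \<and> fav Z \<and> distinct (R@Z) \<and> set (R@Z) = {1..m}"
  by (simp add: Pset_def)

lemma mem_Phset: "(R,Z) \<in> Phset m \<longleftrightarrow> (R,Z) \<in> Pset m \<and> Z \<noteq> []"
  by (simp add: Phset_def)

lemma mem_Ph1set: "(R,Z) \<in> Ph1set m \<longleftrightarrow> (R,Z) \<in> Pset m \<and> Z \<noteq> [] \<and> (\<forall>d\<in>set (tl Z). d < hd Z)"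
  by (simp add: Ph1set_def)

lemma fav_Nil: "fav []" by (simp add: fav_def)

lemma fav_Cons_max:
  assumes "\<forall>d\<in>set Z. d < m" shows "fav (m # Z) \<longleftrightarrow> fav Z"
proof
  assume "fav (m # Z)"
  moreover have "subseq Z (m # Z)" by (rule subseq_drop_many[of Z Z "[m]", simplified])
  ultimately show "fav Z" using fav_mono by blast
next
  assume f: "fav Z"
  show "fav (m # Z)" unfolding fav_def
  proof
    assume "\<exists>b c d. subseq [b, c, d] (m # Z) \<and> b < d"
    then obtain b c d where h: "subseq [b, c, d] (m # Z)" "b < d" by blast
    from h(1) have "(b = m \<and> subseq [c,d] Z) \<or> subseq [b,c,d] Z" by (simp only: sub3_Cons)
    then show False
    proof
      assume "b = m \<and> subseq [c,d] Z"
      then have "d \<in> set Z" "b = m" using sub2_in2 by auto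
      then show False using assms h(2) by auto
    next
      assume "subseq [b,c,d] Z"
      then show False using f h(2) unfolding fav_def by blast
    qed
  qed
qed

lemma fav_two:
  assumes d: "distinct (z # W)" and lt: "\<forall>v\<in>set (z#W). v < m"
  shows "fav (z # m # W) \<longleftrightarrow> fav (z # W) \<and> (\<forall>v\<in>set W. v < z)"
proof
  assume f: "fav (z # m # W)"
  have "subseq (z # W) (z # m # W)" by (simp add: subseq_drop_many[of W W "[m]", simplified])
  then have "fav (z # W)" using f fav_mono by blast
  moreover have "\<forall>v\<in>set W. v < z"
  proof
    fix v assume v: "v \<in> set W"
    then have "subseq [v] W" by (simp add: subseq_singleton_left)
    then have "subseq [z,m,v] (z # m # W)" by simp
    then have "\<not> z < v" using f unfolding fav_def by blast
    moreover have "v \<noteq> z" using d v by auto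
    ultimately show "v < z" by simp
  qed
  ultimately show "fav (z # W) \<and> (\<forall>v\<in>set W. v < z)" by blast
next
  assume a: "fav (z # W) \<and> (\<forall>v\<in>set W. v < z)"
  show "fav (z # m # W)" unfolding fav_def
  proof
    assume "\<exists>b c d. subseq [b, c, d] (z # m # W) \<and> b < d"
    then obtain b c e where h: "subseq [b, c, e] (z # m # W)" "b < e" by blast
    from h(1) have "(b = z \<and> subseq [c,e] (m # W)) \<or> subseq [b,c,e] (m # W)" by (simp only: sub3_Cons)
    then show False
    proof
      assume "b = z \<and> subseq [c,e] (m # W)"
      then have "e \<in> set W" "b = z" using sub2_Cons_tl by auto
      then show False using a h(2) by auto
    next
      assume "subseq [b,c,e] (m # W)"
      then have "(b = m \<and> subseq [c,e] W) \<or> subseq [b,c,e] W" by (simp only: sub3_Cons)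
      then show False
      proof
        assume "b = m \<and> subseq [c,e] W"
        then have "e \<in> set W" "b = m" using sub2_in2 by auto
        then show False using a lt h(2) by fastforce
      next
        assume "subseq [b,c,e] W"
        then have "subseq [b,c,e] (z # W)" using subseq_drop_many[of "[b,c,e]" W "[z]"] by simp
        then show False using a h(2) unfolding fav_def by blast
      qed
    qed
  qed
qed

lemma max_pos:
  assumes f: "fav Z" and d: "distinct Z" and m: "m \<in> set Z" and le: "\<forall>v\<in>set Z. v \<le> m"
  shows "(\<exists>Z'. Z = m # Z') \<or> (\<exists>z Z'. Z = z # m # Z')"
proof (rule ccontr)
  assume n: "\<not> ?thesis"
  obtain z1 z2 Z3 where Z: "Z = z1 # z2 # Z3" using m n by (cases Z; cases "tl Z") auto
  have "m \<in> set Z3" "z1 \<noteq> m" using m n Z by auto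
  then have "subseq [z1, z2, m] Z" unfolding Z by (simp add: subseq_singleton_left)
  moreover have "z1 < m" using le Z \<open>z1 \<noteq> m\<close> by fastforce
  ultimately show False using f unfolding fav_def by blast
qed

lemma sorted_max:
  assumes s: "sorted_wrt (<) R" and m: "(m::nat) \<in> set R" and le: "\<forall>r\<in>set R. r \<le> m"
  shows "R = butlast R @ [m]"
proof -
  have ne: "R \<noteq> []" using m by auto
  have "m \<le> last R" using sorted_last_ge[OF s m] .
  moreover have "last R \<le> m" using le ne by simp
  ultimately have "last R = m" by simp
  then show ?thesis using ne by (metis append_butlast_last_id)
qed

lemma set_Suc: "{1..Suc k} = insert (Suc k) {1..k}" by auto



lemma Pset_range: "(R,Z) \<in> Pset k \<Longrightarrow> v \<in> set (R@Z) \<Longrightarrow> 1 \<le> v \<and> v \<le> k"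
proof -
  assume a: "(R,Z) \<in> Pset k" "v \<in> set (R@Z)"
  then have "v \<in> {1..k}" unfolding mem_Pset by blast
  then show ?thesis by simp
qed

lemma ins_Suc: assumes "insert (Suc k) A = {1..Suc k}" "Suc k \<notin> A" shows "A = {1..k}"
proof -
  have "A = insert (Suc k) A - {Suc k}" using assms(2) by simp
  also have "\<dots> = {1..Suc k} - {Suc k}" using assms(1) by simp
  also have "\<dots> = {1..k}" by auto
  finally show ?thesis .
qed

lemma fA_mem: assumes "(R,Z) \<in> Pset k" shows "(R @ [Suc k], Z) \<in> Pset (Suc k)"
proof -
  have P: "sorted_wrt (<) R" "fav Z" "distinct (R@Z)" "set (R@Z) = {1..k}" using assms mem_Pset by simp_all
  have r: "\<forall>v\<in>set (R@Z). v < Suc k" using Pset_range[OF assms] by fastforce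
  have "sorted_wrt (<) (R @ [Suc k])" using P(1) r by (simp add: sorted_wrt_append)
  moreover have "distinct ((R @ [Suc k]) @ Z)" using P(3) r by auto
  moreover have "set ((R @ [Suc k]) @ Z) = {1..Suc k}" using P(4) set_Suc by auto
  ultimately show ?thesis using P(2) mem_Pset by blast
qed

lemma fB_mem: assumes "(R,Z) \<in> Pset k" shows "(R, Suc k # Z) \<in> Pset (Suc k)"
proof -
  have P: "sorted_wrt (<) R" "fav Z" "distinct (R@Z)" "set (R@Z) = {1..k}" using assms mem_Pset by simp_all
  have r: "\<forall>v\<in>set (R@Z). v < Suc k" using Pset_range[OF assms] by fastforce
  have "fav (Suc k # Z)" using P(2) r fav_Cons_max by simp
  moreover have "distinct (R @ Suc k # Z)" using P(3) r by auto
  moreover have "set (R @ Suc k # Z) = {1..Suc k}" using P(4) set_Suc by auto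
  ultimately show ?thesis using P(1) mem_Pset by blast
qed

lemma fC_mem: assumes "(R,z#W) \<in> Pset k" "\<forall>v\<in>set W. v < z"
  shows "(R, z # Suc k # W) \<in> Pset (Suc k)"
proof -
  have P: "sorted_wrt (<) R" "fav (z#W)" "distinct (R@z#W)" "set (R@z#W) = {1..k}"
    using assms(1) mem_Pset by simp_all
  have r: "\<forall>v\<in>set (R@z#W). v < Suc k" using Pset_range[OF assms(1)] by fastforce
  have "fav (z # Suc k # W)" using fav_two[of z W "Suc k"] P(2,3) r assms(2) by simp
  moreover have "distinct (R @ z # Suc k # W)" using P(3) r by auto
  moreover have "set (R @ z # Suc k # W) = {1..Suc k}" using P(4) set_Suc by auto
  ultimately show ?thesis using P(1) mem_Pset by blast
qed

lemma dec_R: assumes "(R,Z) \<in> Pset (Suc k)" "Suc k \<in> set R"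
  shows "\<exists>R'. R = R' @ [Suc k] \<and> (R',Z) \<in> Pset k"
proof -
  have P: "sorted_wrt (<) R" "fav Z" "distinct (R@Z)" "set (R@Z) = {1..Suc k}"
    using assms(1) mem_Pset by simp_all
  have le: "\<forall>r\<in>set R. r \<le> Suc k" using P(4) by auto
  define R' where "R' = butlast R"
  have RR: "R = R' @ [Suc k]" unfolding R'_def using sorted_max[OF P(1) assms(2) le] .
  have "sorted_wrt (<) R'" using P(1) RR by (simp add: sorted_wrt_append)
  moreover have "distinct (R'@Z)" using P(3) RR by simp
  moreover have "set (R'@Z) = {1..k}"
  proof -
    have "Suc k \<notin> set (R'@Z)" using P(3) RR by auto
    moreover have "insert (Suc k) (set (R'@Z)) = {1..Suc k}" using P(4) RR by auto
    ultimately show ?thesis by (rule ins_Suc[rotated])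
  qed
  ultimately show ?thesis using RR P(2) mem_Pset by blast
qed

lemma dec_Z: assumes "(R,Z) \<in> Pset (Suc k)" "Suc k \<in> set Z"
  shows "(\<exists>Z'. Z = Suc k # Z' \<and> (R,Z') \<in> Pset k) \<or>
         (\<exists>z W. Z = z # Suc k # W \<and> (R, z#W) \<in> Pset k \<and> (\<forall>v\<in>set W. v < z))"
proof -
  have P: "sorted_wrt (<) R" "fav Z" "distinct (R@Z)" "set (R@Z) = {1..Suc k}"
    using assms(1) mem_Pset by simp_all
  have le: "\<forall>v\<in>set Z. v \<le> Suc k" using P(4) by auto
  have dZ: "distinct Z" using P(3) by simp
  have setk: "set (R@Z') = {1..k}" if "set (R@Z) = insert (Suc k) (set (R@Z'))" "Suc k \<notin> set (R@Z')" for Z'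
    using that P(4) ins_Suc by metis
  consider (a) Z' where "Z = Suc k # Z'" | (b) z W where "Z = z # Suc k # W"
    using max_pos[OF P(2) dZ assms(2) le] by blast
  then show ?thesis
  proof cases
    case a
    have r: "\<forall>v\<in>set Z'. v < Suc k"
    proof
      fix v assume v: "v \<in> set Z'"
      then have "v \<le> Suc k" "v \<noteq> Suc k" using le dZ a by auto
      then show "v < Suc k" by simp
    qed
    have "fav Z'" using P(2) a fav_Cons_max[OF r] by simp
    moreover have "distinct (R@Z')" using P(3) a by simp
    moreover have "set (R@Z') = {1..k}" using setk[of Z'] P(3) a by auto
    ultimately show ?thesis using a P(1) mem_Pset by blast
  next
    case b
    have r: "\<forall>v\<in>set (z#W). v < Suc k"
    proof
      fix v assume v: "v \<in> set (z#W)"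
      then have "v \<le> Suc k" "v \<noteq> Suc k" using le dZ b by auto
      then show "v < Suc k" by simp
    qed
    have dzW: "distinct (z#W)" using dZ b by simp
    have f: "fav (z#W) \<and> (\<forall>v\<in>set W. v < z)" using P(2) b fav_two[OF dzW r] by simp
    moreover have "distinct (R@z#W)" using P(3) b by simp
    moreover have "set (R@z#W) = {1..k}" using setk[of "z#W"] P(3) b by auto
    ultimately show ?thesis using b P(1) mem_Pset by blast
  qed
qed



lemma finite_Ph1set: "finite (Ph1set m)"
  by (rule finite_subset[OF _ finite_Pset]) (auto simp: Ph1set_def)

lemma card_Pset: "card (Pset m) = card (Phset m) + 1"
proof -
  have inc: "([1..<m+1], []) \<in> Pset m"
    unfolding mem_Pset by (auto simp: fav_Nil strict_sorted_iff simp del: upt_Suc)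
  have eq: "Pset m = insert ([1..<m+1], []) (Phset m)"
  proof
    show "Pset m \<subseteq> insert ([1..<m+1], []) (Phset m)"
    proof
      fix p assume p: "p \<in> Pset m"
      obtain R Z where pRZ: "p = (R,Z)" by (cases p)
      show "p \<in> insert ([1..<m+1], []) (Phset m)"
      proof (cases "Z = []")
        case True
        have P: "sorted_wrt (<) R" "distinct R" "set R = {1..m}" using p pRZ True mem_Pset by simp_all
        have "R = [1..<m+1]"
          by (rule sorted_distinct_set_unique) (use P strict_sorted_iff in \<open>auto simp del: upt_Suc\<close>)
        then show ?thesis using pRZ True by simp
      next
        case False
        then show ?thesis using p pRZ mem_Phset by simp
      qed
    qed
  next
    show "insert ([1..<m+1], []) (Phset m) \<subseteq> Pset m" using inc by (auto simp: Phset_def)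
  qed
  have "([1..<m+1], []) \<notin> Phset m" by (simp add: Phset_def)
  then show ?thesis unfolding eq using finite_Phset by simp
qed

lemma Phset_0: "Phset 0 = {}"
proof -
  have "(R,Z) \<notin> Phset 0" for R Z
  proof
    assume "(R,Z) \<in> Phset 0"
    then have "set (R@Z) = {}" "Z \<noteq> []" unfolding mem_Phset mem_Pset by auto
    then show False by simp
  qed
  then show ?thesis by auto
qed

lemma Ph1set_0: "Ph1set 0 = {}"
  using Phset_0 unfolding Ph1set_def Phset_def by auto

lemma card_Phset_Suc: "card (Phset (Suc k)) = card (Phset k) + card (Pset k) + card (Ph1set k)"
proof -
  let ?fA = "\<lambda>(R,Z). (R @ [Suc k], Z)"
  let ?fB = "\<lambda>(R,Z). (R, Suc k # Z)"
  let ?fC = "\<lambda>(R,Z). (R, hd Z # Suc k # tl Z)"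
  have eq: "Phset (Suc k) = ?fA ` Phset k \<union> ?fB ` Pset k \<union> ?fC ` Ph1set k"
  proof
    show "Phset (Suc k) \<subseteq> ?fA ` Phset k \<union> ?fB ` Pset k \<union> ?fC ` Ph1set k"
    proof
      fix p assume p: "p \<in> Phset (Suc k)"
      obtain R Z where pRZ: "p = (R,Z)" by (cases p)
      have P: "(R,Z) \<in> Pset (Suc k)" "Z \<noteq> []" using p pRZ mem_Phset by auto
      have "Suc k \<in> set (R@Z)" using P(1) unfolding mem_Pset by auto
      then consider "Suc k \<in> set R" | "Suc k \<in> set Z" by auto
      then show "p \<in> ?fA ` Phset k \<union> ?fB ` Pset k \<union> ?fC ` Ph1set k"
      proof cases
        case 1
        then obtain R' where "R = R' @ [Suc k]" "(R',Z) \<in> Pset k" using dec_R[OF P(1)] by blast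
        then have "(R',Z) \<in> Phset k" "p = ?fA (R',Z)" using P(2) pRZ mem_Phset by auto
        then show ?thesis by blast
      next
        case 2
        then consider (a) Z' where "Z = Suc k # Z'" "(R,Z') \<in> Pset k"
          | (b) z W where "Z = z # Suc k # W" "(R, z#W) \<in> Pset k" "\<forall>v\<in>set W. v < z"
          using dec_Z[OF P(1)] by blast
        then show ?thesis
        proof cases
          case a
          then have "p = ?fB (R,Z')" using pRZ by simp
          then show ?thesis using a by blast
        next
          case b
          then have "(R, z#W) \<in> Ph1set k" using mem_Ph1set by simp
          moreover have "p = ?fC (R, z#W)" using b pRZ by simp
          ultimately show ?thesis by blast
        qed
      qed
    qed
  next
    show "?fA ` Phset k \<union> ?fB ` Pset k \<union> ?fC ` Ph1set k \<subseteq> Phset (Suc k)"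
    proof -
      have "?fA ` Phset k \<subseteq> Phset (Suc k)"
      proof
        fix p assume "p \<in> ?fA ` Phset k"
        then obtain R Z where "(R,Z) \<in> Phset k" "p = (R @ [Suc k], Z)" by auto
        then show "p \<in> Phset (Suc k)" using fA_mem mem_Phset by auto
      qed
      moreover have "?fB ` Pset k \<subseteq> Phset (Suc k)"
      proof
        fix p assume "p \<in> ?fB ` Pset k"
        then obtain R Z where "(R,Z) \<in> Pset k" "p = (R, Suc k # Z)" by auto
        then show "p \<in> Phset (Suc k)" using fB_mem mem_Phset by auto
      qed
      moreover have "?fC ` Ph1set k \<subseteq> Phset (Suc k)"
      proof
        fix p assume "p \<in> ?fC ` Ph1set k"
        then obtain R Z where h: "(R,Z) \<in> Ph1set k" "p = (R, hd Z # Suc k # tl Z)" by auto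
        then have h2: "(R,Z) \<in> Pset k" "Z \<noteq> []" "\<forall>d\<in>set (tl Z). d < hd Z" using mem_Ph1set by auto
        then have "(R, hd Z # tl Z) \<in> Pset k" by simp
        then have "(R, hd Z # Suc k # tl Z) \<in> Pset (Suc k)" using fC_mem h2(3) by blast
        then show "p \<in> Phset (Suc k)" using h mem_Phset by auto
      qed
      ultimately show ?thesis by blast
    qed
  qed
  have notR: "Suc k \<notin> set R" if "(R,Z) \<in> Pset k" for R Z
    using Pset_range[OF that] by fastforce
  have notZ: "Suc k \<notin> set Z" if "(R,Z) \<in> Pset k" for R Z
    using Pset_range[OF that] by fastforce
  have d1: "?fA ` Phset k \<inter> ?fB ` Pset k = {}"
  proof -
    have "Suc k \<in> set (fst x)" if "x \<in> ?fA ` Phset k" for x using that by auto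
    moreover have "Suc k \<notin> set (fst x)" if "x \<in> ?fB ` Pset k" for x
      using that notR by auto
    ultimately show ?thesis by blast
  qed
  have d2: "(?fA ` Phset k \<union> ?fB ` Pset k) \<inter> ?fC ` Ph1set k = {}"
  proof -
    have "Suc k \<in> set (fst x) \<or> hd (snd x) = Suc k" if "x \<in> ?fA ` Phset k \<union> ?fB ` Pset k" for x
      using that by auto
    moreover have "Suc k \<notin> set (fst x) \<and> hd (snd x) \<noteq> Suc k" if "x \<in> ?fC ` Ph1set k" for x
    proof -
      from that obtain R Z where h: "(R,Z) \<in> Ph1set k" "x = (R, hd Z # Suc k # tl Z)" by auto
      then have "(R,Z) \<in> Pset k" "Z \<noteq> []" using mem_Ph1set by auto
      then have "hd Z \<in> set Z" by simp
      then have "hd Z \<noteq> Suc k" using notZ[OF \<open>(R,Z) \<in> Pset k\<close>] by auto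
      then show ?thesis using h notR[OF \<open>(R,Z) \<in> Pset k\<close>] by simp
    qed
    ultimately show ?thesis by blast
  qed
  have iA: "inj_on ?fA (Phset k)" by (auto simp: inj_on_def)
  have iB: "inj_on ?fB (Pset k)" by (auto simp: inj_on_def)
  have iC: "inj_on ?fC (Ph1set k)"
  proof (rule inj_onI)
    fix x y assume x: "x \<in> Ph1set k" and y: "y \<in> Ph1set k" and e: "?fC x = ?fC y"
    obtain R1 Z1 where x1: "x = (R1,Z1)" by (cases x)
    obtain R2 Z2 where y1: "y = (R2,Z2)" by (cases y)
    have "Z1 \<noteq> []" "Z2 \<noteq> []" using x y x1 y1 mem_Ph1set by auto
    moreover have "R1 = R2" "hd Z1 = hd Z2" "tl Z1 = tl Z2" using e x1 y1 by auto
    ultimately show "x = y" using x1 y1 by (metis list.expand)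
  qed
  have fP: "finite (Pset k)" "finite (Phset k)" "finite (Ph1set k)"
    using finite_Pset finite_Phset finite_Ph1set by auto
  have "card (Phset (Suc k)) = card (?fA ` Phset k \<union> ?fB ` Pset k) + card (?fC ` Ph1set k)"
    unfolding eq by (rule card_Un_disjoint) (use fP d2 in auto)
  also have "card (?fA ` Phset k \<union> ?fB ` Pset k) = card (?fA ` Phset k) + card (?fB ` Pset k)"
    by (rule card_Un_disjoint) (use fP d1 in auto)
  finally show ?thesis using card_image[OF iA] card_image[OF iB] card_image[OF iC] by simp
qed

lemma card_Ph1set_Suc: "card (Ph1set (Suc k)) = card (Ph1set k) + card (Pset k)"
proof -
  let ?fA = "\<lambda>(R,Z). (R @ [Suc k], Z)"
  let ?fB = "\<lambda>(R,Z). (R, Suc k # Z)"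
  have notR: "Suc k \<notin> set R" if "(R,Z) \<in> Pset k" for R Z
    using Pset_range[OF that] by fastforce
  have notZ: "Suc k \<notin> set Z" if "(R,Z) \<in> Pset k" for R Z
    using Pset_range[OF that] by fastforce
  have eq: "Ph1set (Suc k) = ?fA ` Ph1set k \<union> ?fB ` Pset k"
  proof
    show "Ph1set (Suc k) \<subseteq> ?fA ` Ph1set k \<union> ?fB ` Pset k"
    proof
      fix p assume p: "p \<in> Ph1set (Suc k)"
      obtain R Z where pRZ: "p = (R,Z)" by (cases p)
      have P: "(R,Z) \<in> Pset (Suc k)" "Z \<noteq> []" "\<forall>d\<in>set (tl Z). d < hd Z"
        using p pRZ mem_Ph1set by auto
      have "Suc k \<in> set (R@Z)" using P(1) unfolding mem_Pset by auto
      then consider "Suc k \<in> set R" | "Suc k \<in> set Z" by auto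
      then show "p \<in> ?fA ` Ph1set k \<union> ?fB ` Pset k"
      proof cases
        case 1
        then obtain R' where "R = R' @ [Suc k]" "(R',Z) \<in> Pset k" using dec_R[OF P(1)] by blast
        then have "(R',Z) \<in> Ph1set k" "p = ?fA (R',Z)" using P pRZ mem_Ph1set by auto
        then show ?thesis by blast
      next
        case 2
        then consider (a) Z' where "Z = Suc k # Z'" "(R,Z') \<in> Pset k"
          | (b) z W where "Z = z # Suc k # W" "(R, z#W) \<in> Pset k" "\<forall>v\<in>set W. v < z"
          using dec_Z[OF P(1)] by blast
        then show ?thesis
        proof cases
          case a
          then have "p = ?fB (R,Z')" using pRZ by simp
          then show ?thesis using a by blast
        next
          case b
          then have "Suc k < z" using P(3) by simp
          moreover have "z \<le> k" using Pset_range[OF b(2), of z] by simp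
          ultimately show ?thesis by simp
        qed
      qed
    qed
  next
    show "?fA ` Ph1set k \<union> ?fB ` Pset k \<subseteq> Ph1set (Suc k)"
    proof -
      have "?fA ` Ph1set k \<subseteq> Ph1set (Suc k)"
      proof
        fix p assume "p \<in> ?fA ` Ph1set k"
        then obtain R Z where "(R,Z) \<in> Ph1set k" "p = (R @ [Suc k], Z)" by auto
        then show "p \<in> Ph1set (Suc k)" using fA_mem mem_Ph1set by auto
      qed
      moreover have "?fB ` Pset k \<subseteq> Ph1set (Suc k)"
      proof
        fix p assume "p \<in> ?fB ` Pset k"
        then obtain R Z where h: "(R,Z) \<in> Pset k" "p = (R, Suc k # Z)" by auto
        have "\<forall>d\<in>set Z. d < Suc k" using Pset_range[OF h(1)] by fastforce
        then show "p \<in> Ph1set (Suc k)" using h fB_mem mem_Ph1set by auto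
      qed
      ultimately show ?thesis by blast
    qed
  qed
  have d1: "?fA ` Ph1set k \<inter> ?fB ` Pset k = {}"
  proof -
    have "Suc k \<in> set (fst x)" if "x \<in> ?fA ` Ph1set k" for x using that by auto
    moreover have "Suc k \<notin> set (fst x)" if "x \<in> ?fB ` Pset k" for x
      using that notR by auto
    ultimately show ?thesis by blast
  qed
  have iA: "inj_on ?fA (Ph1set k)" by (auto simp: inj_on_def)
  have iB: "inj_on ?fB (Pset k)" by (auto simp: inj_on_def)
  have fP: "finite (Pset k)" "finite (Ph1set k)"
    using finite_Pset finite_Ph1set by auto
  have "card (Ph1set (Suc k)) = card (?fA ` Ph1set k) + card (?fB ` Pset k)"
    unfolding eq by (rule card_Un_disjoint) (use fP d1 in auto)
  then show ?thesis using card_image[OF iA] card_image[OF iB] by simp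
qed




lemma fps_alg:
  fixes a h h1 :: "nat \<Rightarrow> nat"
  assumes a: "\<And>n. a n = 1 + (\<Sum>M\<in>{1..n}. h (M-1) * a (n-M))"
    and h0: "h 0 = 0" and h10: "h1 0 = 0"
    and hS: "\<And>k. h (Suc k) = h k + (h k + 1) + h1 k"
    and h1S: "\<And>k. h1 (Suc k) = h1 k + (h k + 1)"
  shows "(1 - 4 * fps_X + 3 * fps_X ^ 2 - fps_X ^ 3) * Abs_fps (\<lambda>n. real (a n)) = (1 - 3 * fps_X + fps_X ^ 2 :: real fps)"
proof -
  define A where "A = Abs_fps (\<lambda>n. real (a n))"
  define H where "H = Abs_fps (\<lambda>n. real (h n))"
  define H1 where "H1 = Abs_fps (\<lambda>n. real (h1 n))"
  define E where "E = (Abs_fps (\<lambda>n. 1) :: real fps)"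
  define X where "X = (fps_X :: real fps)"
  have e1: "H = X * (H + H + E + H1)"
  proof (rule fps_ext)
    fix n show "H $ n = (X * (H + H + E + H1)) $ n"
      by (cases n) (simp_all add: H_def E_def H1_def X_def h0 hS numeral_fps_const)
  qed
  have e2: "H1 = X * (H1 + H + E)"
  proof (rule fps_ext)
    fix n show "H1 $ n = (X * (H1 + H + E)) $ n"
      by (cases n) (simp_all add: H_def E_def H1_def X_def h10 h1S)
  qed
  have e3: "A = E + X * (H * A)"
  proof (rule fps_ext)
    fix n show "A $ n = (E + X * (H * A)) $ n"
    proof (cases n)
      case 0 then show ?thesis using a[of 0] by (simp add: A_def E_def X_def)
    next
      case (Suc k)
      have "(\<Sum>M\<in>{1..Suc k}. h (M-1) * a (Suc k - M)) = (\<Sum>i\<in>{0..k}. h i * a (k - i))"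
        using sum.shift_bounds_cl_Suc_ivl[of "\<lambda>M. h (M-1) * a (Suc k - M)" 0 k] by simp
      then have "real (a (Suc k)) = 1 + (\<Sum>i=0..k. real (h i) * real (a (k - i)))"
        using a[of "Suc k"] by (simp add: of_nat_sum)
      then show ?thesis using Suc by (simp add: E_def X_def) (simp add: A_def H_def fps_mult_nth)
    qed
  qed
  have e4: "(1 - X) * E = 1"
  proof (rule fps_ext)
    fix n show "((1 - X) * E) $ n = (1::real fps) $ n"
      by (cases n) (simp_all add: E_def X_def algebra_simps)
  qed
  have "(1 - 4 * X + 3 * X ^ 2 - X ^ 3) * A = 1 - 3 * X + X ^ 2"
    using e1 e2 e3 e4 by algebra
  then show ?thesis unfolding A_def X_def .
qed




definition S :: "nat \<Rightarrow> nat \<Rightarrow> nat" where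
  "S j m = (\<Sum>i<m+1. (m + 2*i) choose (3*i + j))"

lemma S_ext: "m < N + j \<Longrightarrow> (\<Sum>i<N. (m + 2*i) choose (3*i + j)) = (\<Sum>i<N+K. (m + 2*i) choose (3*i + j))"
proof (induction K)
  case (Suc K)
  have "m + 2*(N+K) < 3*(N+K) + j" using Suc.prems by simp
  then have "(m + 2*(N+K)) choose (3*(N+K) + j) = 0" by simp
  then show ?case using Suc by simp
qed simp

lemma F1: "S 1 (Suc m) = S 1 m + S 0 m"
proof -
  have "S 1 (Suc m) = (\<Sum>i<m+2. ((m + 2*i) choose (3*i)) + ((m + 2*i) choose (3*i + 1)))"
    unfolding S_def by (intro sum.cong) simp_all
  also have "\<dots> = (\<Sum>i<m+2. (m + 2*i) choose (3*i + 0)) + (\<Sum>i<m+2. (m + 2*i) choose (3*i + 1))"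
    by (simp add: sum.distrib)
  also have "(\<Sum>i<m+2. (m + 2*i) choose (3*i + 0)) = S 0 m"
    unfolding S_def using S_ext[of m "m+1" 0 1] by simp
  also have "(\<Sum>i<m+2. (m + 2*i) choose (3*i + 1)) = S 1 m"
    unfolding S_def using S_ext[of m "m+1" 1 1] by simp
  finally show ?thesis by simp
qed

lemma F2: "S 2 (Suc m) = S 2 m + S 1 m"
proof -
  have "S 2 (Suc m) = (\<Sum>i<m+2. ((m + 2*i) choose (3*i + 1)) + ((m + 2*i) choose (3*i + 2)))"
    unfolding S_def by (intro sum.cong) (simp_all add: numeral_2_eq_2)
  also have "\<dots> = (\<Sum>i<m+2. (m + 2*i) choose (3*i + 1)) + (\<Sum>i<m+2. (m + 2*i) choose (3*i + 2))"
    by (simp add: sum.distrib)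
  also have "(\<Sum>i<m+2. (m + 2*i) choose (3*i + 1)) = S 1 m"
    unfolding S_def using S_ext[of m "m+1" 1 1] by simp
  also have "(\<Sum>i<m+2. (m + 2*i) choose (3*i + 2)) = S 2 m"
    unfolding S_def using S_ext[of m "m+1" 2 1] by simp
  finally show ?thesis by simp
qed

lemma F3: "S 0 (Suc m) = S 0 m + S 2 (Suc (Suc m))"
proof -
  have "S 0 (Suc m) = (\<Sum>i<Suc (Suc m). (Suc m + 2*i) choose (3*i))"
    unfolding S_def by simp
  also have "\<dots> = 1 + (\<Sum>i<Suc m. (Suc m + 2*Suc i) choose (3*Suc i))"
    by (subst sum.lessThan_Suc_shift) simp
  also have "(\<Sum>i<Suc m. (Suc m + 2*Suc i) choose (3*Suc i))
     = (\<Sum>i<Suc m. (((m + 2) + 2*i) choose (3*i + 2)) + ((m + 2*Suc i) choose (3*Suc i)))"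
    by (intro sum.cong) (simp_all add: numeral_2_eq_2 numeral_3_eq_3)
  also have "\<dots> = (\<Sum>i<Suc m. ((m + 2) + 2*i) choose (3*i + 2)) + (\<Sum>i<Suc m. (m + 2*Suc i) choose (3*Suc i))"
    by (simp add: sum.distrib)
  also have "(\<Sum>i<Suc m. ((m + 2) + 2*i) choose (3*i + 2)) = S 2 (Suc (Suc m))"
    unfolding S_def using S_ext[of "m+2" "m+1" 2 2] by simp
  also have "1 + (S 2 (Suc (Suc m)) + (\<Sum>i<Suc m. (m + 2*Suc i) choose (3*Suc i))) = S 2 (Suc (Suc m)) + S 0 m"
  proof -
    have "S 0 m = (\<Sum>i<Suc (Suc m). (m + 2*i) choose (3*i + 0))"
      unfolding S_def using S_ext[of m "m+1" 0 1] by simp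
    also have "\<dots> = 1 + (\<Sum>i<Suc m. (m + 2*Suc i) choose (3*Suc i))"
      by (subst sum.lessThan_Suc_shift) simp
    finally show ?thesis by simp
  qed
  finally show ?thesis by simp
qed

lemma S_rec: "int (S 0 (m+3)) = 4 * int (S 0 (m+2)) - 3 * int (S 0 (m+1)) + int (S 0 m)"
proof -
  have a1: "S 0 (m+1) = S 0 m + S 2 (m+2)" using F3[of m] by (simp add: eval_nat_numeral)
  have a2: "S 0 (m+2) = S 0 (m+1) + S 2 (m+3)" using F3[of "m+1"] by (simp add: eval_nat_numeral)
  have a3: "S 0 (m+3) = S 0 (m+2) + S 2 (m+4)" using F3[of "m+2"] by (simp add: eval_nat_numeral)
  have b1: "S 2 (m+3) = S 2 (m+2) + S 1 (m+2)" using F2[of "m+2"] by (simp add: eval_nat_numeral)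
  have b2: "S 2 (m+4) = S 2 (m+3) + S 1 (m+3)" using F2[of "m+3"] by (simp add: eval_nat_numeral)
  have c1: "S 1 (m+3) = S 1 (m+2) + S 0 (m+2)" using F1[of "m+2"] by (simp add: eval_nat_numeral)
  show ?thesis using a1 a2 a3 b1 b2 c1 by linarith
qed

lemma S_init: "S 0 0 = 1" "S 0 1 = 2" "S 0 2 = 6"
  by (simp_all add: S_def numeral_eq_Suc)

lemma coeff_extract:
  fixes A :: "real fps"
  assumes "(1 - 4 * fps_X + 3 * fps_X ^ 2 - fps_X ^ 3) * A = 1 - 3 * fps_X + fps_X ^ 2"
  shows "A $ 0 = 1" "A $ 1 = 1" "A $ 2 = 2"
    "\<And>n. n \<ge> 3 \<Longrightarrow> A $ n = 4 * A $ (n-1) - 3 * A $ (n-2) + A $ (n-3)"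
proof -
  have eq: "A - 4 * (fps_X * A) + 3 * (fps_X ^ 2 * A) - fps_X ^ 3 * A = 1 - 3 * fps_X + fps_X ^ 2"
    using assms by (simp add: algebra_simps)
  have c: "A $ n - 4 * (if n = 0 then 0 else A $ (n-1)) + 3 * (if n < 2 then 0 else A $ (n-2))
      - (if n < 3 then 0 else A $ (n-3)) = (if n = 0 then 1 else 0) - 3 * (if n = 1 then 1 else 0) + (if n = 2 then 1 else 0)" for n
  proof -
    have "(A - 4 * (fps_X * A) + 3 * (fps_X ^ 2 * A) - fps_X ^ 3 * A) $ n = (1 - 3 * fps_X + fps_X ^ 2 :: real fps) $ n"
      using eq by simp
    then show ?thesis
      by (simp add: numeral_fps_const fps_X_power_mult_nth fps_X_power_nth fps_X_nth)
  qed
  show "A $ 0 = 1" using c[of 0] by simp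
  show "A $ 1 = 1" using c[of 0] c[of 1] by simp
  show "A $ 2 = 2" using c[of 0] c[of 1] c[of 2] by simp
  show "\<And>n. n \<ge> 3 \<Longrightarrow> A $ n = 4 * A $ (n-1) - 3 * A $ (n-2) + A $ (n-3)"
  proof -
    fix n :: nat assume "n \<ge> 3"
    then show "A $ n = 4 * A $ (n-1) - 3 * A $ (n-2) + A $ (n-3)" using c[of n] by simp
  qed
qed



lemma sub_idx_intro:
  "sorted_wrt (<) is \<Longrightarrow> \<forall>i\<in>set is. i < length xs \<Longrightarrow> subseq (map ((!) xs) is) xs"
proof (induction xs arbitrary: "is")
  case Nil
  then show ?case by (cases "is") auto
next
  case (Cons x xs)
  show ?case
  proof (cases "is")
    case Nil then show ?thesis by simp
  next
    case (Cons i is')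
    have pos: "\<forall>j\<in>set is'. 0 < j" using Cons Cons.prems(1) by auto
    have sm: "sorted_wrt (<) (map (\<lambda>j. j - 1) is')"
      using Cons.prems(1) Cons pos by (auto simp: sorted_wrt_map elim!: sorted_wrt_mono_rel[rotated])
    have bd: "\<forall>j\<in>set (map (\<lambda>j. j - 1) is'). j < length xs" using Cons.prems(2) Cons pos by auto
    have mm: "map ((!) (x # xs)) is' = map ((!) xs) (map (\<lambda>j. j - 1) is')"
      using pos by (auto simp: nth_Cons')
    show ?thesis
    proof (cases "i = 0")
      case True
      have sb: "subseq (map ((!) xs) (map (\<lambda>j. j - 1) is')) xs" using Cons.IH[OF sm bd] .
      have e: "map ((!) (x#xs)) is = x # map ((!) xs) (map (\<lambda>j. j - 1) is')"
        unfolding \<open>is = i # is'\<close> True list.map nth_Cons_0 mm by (rule refl)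
      show ?thesis unfolding e by (rule subseq_Cons2) (rule sb)
    next
      case False
      have pos2: "\<forall>j\<in>set is. 0 < j" using pos False Cons by auto
      have sm2: "sorted_wrt (<) (map (\<lambda>j. j - 1) is)"
        using Cons.prems(1) pos2 by (auto simp: sorted_wrt_map elim!: sorted_wrt_mono_rel[rotated])
      have bd2: "\<forall>j\<in>set (map (\<lambda>j. j - 1) is). j < length xs" using Cons.prems(2) pos2 by auto
      have mm2: "map ((!) (x # xs)) is = map ((!) xs) (map (\<lambda>j. j - 1) is)"
        using pos2 by (auto simp: nth_Cons')
      have sb: "subseq (map ((!) xs) (map (\<lambda>j. j - 1) is)) xs" using Cons.IH[OF sm2 bd2] .
      show ?thesis unfolding mm2 by (rule list_emb_Cons) (rule sb)
    qed
  qed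
qed

lemma sub_idx_elim:
  "subseq ys xs \<Longrightarrow> \<exists>is. sorted_wrt (<) is \<and> (\<forall>i\<in>set is. i < length xs) \<and> ys = map ((!) xs) is"
proof (induction rule: list_emb.induct)
  case (list_emb_Nil ys)
  then show ?case by (intro exI[of _ "[]"]) simp
next
  case (list_emb_Cons xs ys y)
  then obtain "is" where h: "sorted_wrt (<) is" "\<forall>i\<in>set is. i < length ys" "xs = map ((!) ys) is" by blast
  show ?case
    using h by (intro exI[of _ "map Suc is"]) (auto simp: sorted_wrt_map)
next
  case (list_emb_Cons2 x y xs ys)
  then obtain "is" where h: "sorted_wrt (<) is" "\<forall>i\<in>set is. i < length ys" "xs = map ((!) ys) is" by blast
  show ?case
    using h list_emb_Cons2.hyps(1) by (intro exI[of _ "0 # map Suc is"]) (auto simp: sorted_wrt_map)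
qed

lemma occ_idx: "occ \<pi> \<longleftrightarrow> (\<exists>p0 p1 p2 p3. p0 < p1 \<and> p1 < p2 \<and> p2 < p3 \<and> p3 < length \<pi> \<and>
    \<pi>!p1 < \<pi>!p0 \<and> \<pi>!p2 < \<pi>!p0 \<and> \<pi>!p1 < \<pi>!p3)"
proof
  assume "occ \<pi>"
  then obtain a b c d where h: "subseq [a,b,c,d] \<pi>" "b < a" "c < a" "b < d" unfolding occ_def by blast
  from sub_idx_elim[OF h(1)] obtain "is" where
    i0: "sorted_wrt (<) is \<and> (\<forall>i\<in>set is. i < length \<pi>) \<and> [a,b,c,d] = map ((!) \<pi>) is" ..
  then have i: "sorted_wrt (<) is" "\<forall>i\<in>set is. i < length \<pi>" "[a,b,c,d] = map ((!) \<pi>) is"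
    using i0 by simp_all
  have "length is = 4" using arg_cong[OF i(3), of length] by simp
  then obtain p0 p1 p2 p3 where "is = [p0,p1,p2,p3]"
    by (auto simp: numeral_eq_Suc length_Suc_conv)
  then show "\<exists>p0 p1 p2 p3. p0 < p1 \<and> p1 < p2 \<and> p2 < p3 \<and> p3 < length \<pi> \<and>
    \<pi>!p1 < \<pi>!p0 \<and> \<pi>!p2 < \<pi>!p0 \<and> \<pi>!p1 < \<pi>!p3" using i h by auto
next
  assume "\<exists>p0 p1 p2 p3. p0 < p1 \<and> p1 < p2 \<and> p2 < p3 \<and> p3 < length \<pi> \<and>
    \<pi>!p1 < \<pi>!p0 \<and> \<pi>!p2 < \<pi>!p0 \<and> \<pi>!p1 < \<pi>!p3"
  then obtain p0 p1 p2 p3 where h: "p0 < p1" "p1 < p2" "p2 < p3" "p3 < length \<pi>"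
    "\<pi>!p1 < \<pi>!p0" "\<pi>!p2 < \<pi>!p0" "\<pi>!p1 < \<pi>!p3" by blast
  have "subseq (map ((!) \<pi>) [p0,p1,p2,p3]) \<pi>" by (rule sub_idx_intro) (use h in auto)
  then show "occ \<pi>" unfolding occ_def using h by fastforce
qed

lemma four: "{1..4::nat} = {1,2,3,4}" by auto

lemma pop_occ: "pop_contains 4 popP \<pi> \<longleftrightarrow> occ \<pi>"
proof
  assume "pop_contains 4 popP \<pi>"
  then obtain i where h: "strict_mono_on {1..4} i" "\<forall>x\<in>{1..4}. 1 \<le> i x \<and> i x \<le> length \<pi>"
    "\<forall>(x, y)\<in>popP. \<pi> ! (i x - 1) > \<pi> ! (i y - 1)" unfolding pop_contains_def by blast
  have m: "i 1 < i 2" "i 2 < i 3" "i 3 < i 4" using h(1) by (auto intro: strict_mono_onD)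
  have b: "1 \<le> i 1" "i 4 \<le> length \<pi>" using h(2) by auto
  have r: "\<pi> ! (i 2 - 1) < \<pi> ! (i 1 - 1)" "\<pi> ! (i 3 - 1) < \<pi> ! (i 1 - 1)" "\<pi> ! (i 2 - 1) < \<pi> ! (i 4 - 1)"
    using h(3) unfolding popP_def by auto
  show "occ \<pi>" unfolding occ_idx
    by (rule exI[of _ "i 1 - 1"], rule exI[of _ "i 2 - 1"], rule exI[of _ "i 3 - 1"], rule exI[of _ "i 4 - 1"])
      (use m b r in auto)
next
  assume "occ \<pi>"
  then obtain p0 p1 p2 p3 where h: "p0 < p1" "p1 < p2" "p2 < p3" "p3 < length \<pi>"
    "\<pi>!p1 < \<pi>!p0" "\<pi>!p2 < \<pi>!p0" "\<pi>!p1 < \<pi>!p3" unfolding occ_idx by blast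
  define i where "i = (\<lambda>x::nat. if x = 1 then p0+1 else if x = 2 then p1+1 else if x = 3 then p2+1 else p3+1)"
  have "strict_mono_on {1..4} i"
    unfolding strict_mono_on_def four i_def using h by auto
  moreover have "\<forall>x\<in>{1..4}. 1 \<le> i x \<and> i x \<le> length \<pi>" unfolding four i_def using h by auto
  moreover have "\<forall>(x, y)\<in>popP. \<pi> ! (i x - 1) > \<pi> ! (i y - 1)" unfolding popP_def i_def using h by auto
  ultimately show "pop_contains 4 popP \<pi>" unfolding pop_contains_def by blast
qed

definition Qs :: "nat list set" where "Qs = {[4,1,3,2], [4,2,1,3], [3,2,1,4], [4,1,2,3], [3,1,2,4]}"

lemma iso_cases:
  fixes V :: "nat \<Rightarrow> nat"
  assumes d: "V 1 \<noteq> V 2" "V 1 \<noteq> V 3" "V 1 \<noteq> V 4" "V 2 \<noteq> V 3" "V 2 \<noteq> V 4" "V 3 \<noteq> V 4"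
    and r: "V 2 < V 1" "V 3 < V 1" "V 2 < V 4"
  shows "\<exists>q\<in>Qs. \<forall>x\<in>{1..4}. \<forall>y\<in>{1..4}. (V x < V y \<longleftrightarrow> q!(x-1) < q!(y-1))"
proof (cases "V 1 < V 4")
  case True
  show ?thesis
  proof (cases "V 3 < V 2")
    case True
    then show ?thesis using \<open>V 1 < V 4\<close> d r unfolding Qs_def four
      by (intro bexI[of _ "[3,2,1,4]"]) auto
  next
    case False
    then show ?thesis using \<open>V 1 < V 4\<close> d r unfolding Qs_def four
      by (intro bexI[of _ "[3,1,2,4]"]) auto
  qed
next
  case False
  then have v41: "V 4 < V 1" using d by simp
  show ?thesis
  proof (cases "V 3 < V 2")
    case True
    then show ?thesis using v41 d r unfolding Qs_def four
      by (intro bexI[of _ "[4,2,1,3]"]) auto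
  next
    case False
    then have v23: "V 2 < V 3" using d by simp
    show ?thesis
    proof (cases "V 3 < V 4")
      case True
      then show ?thesis using v41 v23 d r unfolding Qs_def four
        by (intro bexI[of _ "[4,1,2,3]"]) auto
    next
      case False
      then show ?thesis using v41 v23 d r unfolding Qs_def four
        by (intro bexI[of _ "[4,1,3,2]"]) auto
    qed
  qed
qed

lemma pat_equiv:
  assumes dist: "distinct \<pi>"
  shows "pop_contains 4 popP \<pi> \<longleftrightarrow> (\<exists>q\<in>Qs. pat_contains q \<pi>)"
proof
  assume "pop_contains 4 popP \<pi>"
  then obtain i where h: "strict_mono_on {1..4} i" "\<forall>x\<in>{1..4}. 1 \<le> i x \<and> i x \<le> length \<pi>"
    "\<forall>(x, y)\<in>popP. \<pi> ! (i x - 1) > \<pi> ! (i y - 1)" unfolding pop_contains_def by blast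
  define V where "V = (\<lambda>x. \<pi> ! (i x - 1))"
  have m: "i 1 < i 2" "i 2 < i 3" "i 3 < i 4" using h(1) by (auto intro: strict_mono_onD)
  have b: "1 \<le> i 1" "i 4 \<le> length \<pi>" using h(2) by auto
  have neq: "V x \<noteq> V y" if "x \<in> {1..4}" "y \<in> {1..4}" "x < y" for x y
  proof -
    have "i x < i y" using h(1) that by (auto intro: strict_mono_onD)
    moreover have "1 \<le> i x" "i y \<le> length \<pi>" using h(2) that by auto
    ultimately have "i x - 1 \<noteq> i y - 1" "i x - 1 < length \<pi>" "i y - 1 < length \<pi>" by auto
    then show ?thesis unfolding V_def using dist by (simp add: nth_eq_iff_index_eq)
  qed
  have d: "V 1 \<noteq> V 2" "V 1 \<noteq> V 3" "V 1 \<noteq> V 4" "V 2 \<noteq> V 3" "V 2 \<noteq> V 4" "V 3 \<noteq> V 4"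
    using neq by auto
  have r: "V 2 < V 1" "V 3 < V 1" "V 2 < V 4" using h(3) unfolding popP_def V_def by auto
  obtain q where q: "q \<in> Qs" "\<forall>x\<in>{1..4}. \<forall>y\<in>{1..4}. (V x < V y \<longleftrightarrow> q!(x-1) < q!(y-1))"
    using iso_cases[OF d r] by blast
  have lq: "length q = 4" using q(1) unfolding Qs_def by auto
  have "pat_contains q \<pi>" unfolding pat_contains_def lq using h(1,2) q(2) unfolding V_def by blast
  then show "\<exists>q\<in>Qs. pat_contains q \<pi>" using q(1) by blast
next
  assume "\<exists>q\<in>Qs. pat_contains q \<pi>"
  then obtain q where q: "q \<in> Qs" "pat_contains q \<pi>" by blast
  have lq: "length q = 4" using q(1) unfolding Qs_def by auto
  obtain i where h: "strict_mono_on {1..4} i" "\<forall>x\<in>{1..4}. 1 \<le> i x \<and> i x \<le> length \<pi>"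
    "\<forall>x\<in>{1..4}. \<forall>y\<in>{1..4}. (\<pi> ! (i x - 1) < \<pi> ! (i y - 1) \<longleftrightarrow> q!(x-1) < q!(y-1))"
    using q(2) unfolding pat_contains_def lq by blast
  have qr: "q!1 < q!0" "q!2 < q!0" "q!1 < q!3" using q(1) unfolding Qs_def by auto
  have "\<pi> ! (i 2 - 1) < \<pi> ! (i 1 - 1)" using h(3) qr by auto
  moreover have "\<pi> ! (i 3 - 1) < \<pi> ! (i 1 - 1)" using h(3) qr by auto
  moreover have "\<pi> ! (i 2 - 1) < \<pi> ! (i 4 - 1)" using h(3) qr by auto
  ultimately have "\<forall>(x, y)\<in>popP. \<pi> ! (i x - 1) > \<pi> ! (i y - 1)" unfolding popP_def by auto
  then show "pop_contains 4 popP \<pi>" unfolding pop_contains_def using h(1,2) by blast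
qed

theorem theorem3p12:
  shows "(\<forall>n. \<forall>\<pi>\<in>perms n. pop_avoids 4 popP \<pi> \<longleftrightarrow>
             (\<forall>q\<in>{[4,1,3,2], [4,2,1,3], [3,2,1,4], [4,1,2,3], [3,1,2,4]}. pat_avoids q \<pi>))
    \<and> aP 0 = 1 \<and> aP 1 = 1 \<and> aP 2 = 2
    \<and> (\<forall>n\<ge>3. int (aP n) = 4 * int (aP (n - 1)) - 3 * int (aP (n - 2)) + int (aP (n - 3)))
    \<and> (\<forall>n\<ge>1. aP n = (\<Sum>i<n. (n + 2 * i - 1) choose (3 * i)))
    \<and> Abs_fps (\<lambda>n. real (aP n)) =
        (1 - 3 * fps_X + fps_X ^ 2) / (1 - 4 * fps_X + 3 * fps_X ^ 2 - fps_X ^ 3)"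
proof -
  have A_eq: "aP n = card (Aset n)" for n
    unfolding aP_def Aset_def pop_avoids_def pop_occ by simp
  have part1: "\<forall>n. \<forall>\<pi>\<in>perms n. pop_avoids 4 popP \<pi> \<longleftrightarrow>
             (\<forall>q\<in>{[4,1,3,2], [4,2,1,3], [3,2,1,4], [4,1,2,3], [3,1,2,4]}. pat_avoids q \<pi>)"
  proof (intro allI ballI)
    fix n \<pi> assume "\<pi> \<in> perms n"
    then have "distinct \<pi>" by (simp add: perms_def)
    then have "pop_contains 4 popP \<pi> \<longleftrightarrow> (\<exists>q\<in>Qs. pat_contains q \<pi>)" by (rule pat_equiv)
    then show "pop_avoids 4 popP \<pi> \<longleftrightarrow>
             (\<forall>q\<in>{[4,1,3,2], [4,2,1,3], [3,2,1,4], [4,1,2,3], [3,1,2,4]}. pat_avoids q \<pi>)"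
      unfolding pop_avoids_def pat_avoids_def Qs_def by blast
  qed
  have rec_a: "aP n = 1 + (\<Sum>M\<in>{1..n}. card (Phset (M-1)) * aP (n-M))" for n
    using card_A[of n] A_eq by simp
  have fps: "(1 - 4 * fps_X + 3 * fps_X ^ 2 - fps_X ^ 3) * Abs_fps (\<lambda>n. real (aP n)) = (1 - 3 * fps_X + fps_X ^ 2 :: real fps)"
  proof (rule fps_alg[of aP "\<lambda>k. card (Phset k)" "\<lambda>k. card (Ph1set k)"])
    show "\<And>n. aP n = 1 + (\<Sum>M\<in>{1..n}. card (Phset (M-1)) * aP (n-M))" by (rule rec_a)
    show "card (Phset 0) = 0" by (simp add: Phset_0)
    show "card (Ph1set 0) = 0" by (simp add: Ph1set_0)
    show "\<And>k. card (Phset (Suc k)) = card (Phset k) + (card (Phset k) + 1) + card (Ph1set k)"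
      using card_Phset_Suc card_Pset by simp
    show "\<And>k. card (Ph1set (Suc k)) = card (Ph1set k) + (card (Phset k) + 1)"
      using card_Ph1set_Suc card_Pset by simp
  qed
  note ce = coeff_extract[OF fps]
  have v0: "aP 0 = 1" using ce(1) by simp
  have v1: "aP 1 = 1" using ce(2) by simp
  have v2: "aP 2 = 2" using ce(3) by simp
  have recr: "\<forall>n\<ge>3. int (aP n) = 4 * int (aP (n - 1)) - 3 * int (aP (n - 2)) + int (aP (n - 3))"
  proof (intro allI impI)
    fix n :: nat assume "n \<ge> 3"
    then have "real (aP n) = 4 * real (aP (n-1)) - 3 * real (aP (n-2)) + real (aP (n-3))"
      using ce(4)[of n] by simp
    then have "real_of_int (int (aP n)) = real_of_int (4 * int (aP (n - 1)) - 3 * int (aP (n - 2)) + int (aP (n - 3)))"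
      by simp
    then show "int (aP n) = 4 * int (aP (n - 1)) - 3 * int (aP (n - 2)) + int (aP (n - 3))"
      by (rule of_int_eq_iff[THEN iffD1])
  qed
  have aS: "n \<ge> 1 \<Longrightarrow> aP n = S 0 (n-1)" for n
  proof (induction n rule: less_induct)
    case (less n)
    consider "n = 1" | "n = 2" | "n = 3" | "n \<ge> 4" using less.prems by linarith
    then show ?case
    proof cases
      case 1 then show ?thesis using v1 S_init by simp
    next
      case 2 then show ?thesis using v2 S_init by simp
    next
      case 3
      have "int (aP 3) = 4 * int (aP 2) - 3 * int (aP 1) + int (aP 0)" using recr by simp
      then have "aP 3 = 6" using v0 v1 v2 by simp
      then show ?thesis using 3 S_init by simp
    next
      case 4
      have j1: "aP (n-1) = S 0 (n-1-1)" using less.IH[of "n-1"] 4 by simp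
      have j2: "aP (n-2) = S 0 (n-2-1)" using less.IH[of "n-2"] 4 by simp
      have j3: "aP (n-3) = S 0 (n-3-1)" using less.IH[of "n-3"] 4 by simp
      have k: "n-1-1 = n-2" "n-2-1 = n-3" "n-3-1 = n-4" by simp_all
      have i1: "aP (n-1) = S 0 (n-2)" using j1 unfolding k .
      have i2: "aP (n-2) = S 0 (n-3)" using j2 unfolding k .
      have i3: "aP (n-3) = S 0 (n-4)" using j3 unfolding k .
      have r: "int (aP n) = 4 * int (aP (n - 1)) - 3 * int (aP (n - 2)) + int (aP (n - 3))"
        using recr 4 by simp
      have s: "int (S 0 ((n-4)+3)) = 4 * int (S 0 ((n-4)+2)) - 3 * int (S 0 ((n-4)+1)) + int (S 0 (n-4))"
        by (rule S_rec)
      have e1: "(n-4)+3 = n-1" "(n-4)+2 = n-2" "(n-4)+1 = n-3" using 4 by simp_all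
      have "int (aP n) = int (S 0 (n-1))" using r s i1 i2 i3 unfolding e1 by simp
      then show ?thesis by simp
    qed
  qed
  have binom: "\<forall>n\<ge>1. aP n = (\<Sum>i<n. (n + 2 * i - 1) choose (3 * i))"
  proof (intro allI impI)
    fix n :: nat assume n: "n \<ge> 1"
    have "(\<Sum>i<n. (n + 2 * i - 1) choose (3 * i)) = S 0 (n-1)"
      unfolding S_def using n by (intro sum.cong) auto
    then show "aP n = (\<Sum>i<n. (n + 2 * i - 1) choose (3 * i))" using aS[OF n] by simp
  qed
  have gf: "Abs_fps (\<lambda>n. real (aP n)) =
        (1 - 3 * fps_X + fps_X ^ 2) / (1 - 4 * fps_X + 3 * fps_X ^ 2 - fps_X ^ 3)"
  proof -
    define D :: "real fps" where "D = 1 - 4 * fps_X + 3 * fps_X ^ 2 - fps_X ^ 3"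
    define A where "A = Abs_fps (\<lambda>n. real (aP n))"
    have D0: "D $ 0 \<noteq> 0" unfolding D_def by (simp add: fps_X_power_nth numeral_fps_const)
    have "(1 - 3 * fps_X + fps_X ^ 2) / D = (D * A) * inverse D"
      using fps D0 unfolding D_def A_def by (simp add: fps_divide_unit)
    also have "\<dots> = A * (D * inverse D)" by (simp add: algebra_simps)
    also have "\<dots> = A" using inverse_mult_eq_1'[OF D0] by simp
    finally show ?thesis unfolding D_def A_def by simp
  qed
  show ?thesis using part1 v0 v1 v2 recr binom gf by blast
qed

end
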